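(* Let $\widetilde{\Sigma}_1,\widetilde{\Sigma}_2$ be disjoint visibly pushdown alphabets, $\widetilde{\Sigma}=\widetilde{\Sigma}_1\uplus\widetilde{\Sigma}_2$, and $P_1\subseteq\widetilde{\Sigma}_1^*$, $P_2\subseteq\widetilde{\Sigma}_2^*$ well-matched visibly pushdown languages. If $\prec$ is a visibly pushdown contextual order on $\widetilde{\Sigma}$ and $\mathrm{red}_\prec(P_1\parallel P_2)\subseteq\mathsf{wn}(P_1\parallel P_2)$, then $\mathrm{red}_\prec(P_1\parallel P_2)$ is a visibly pushdown language.
   Context: A visibly pushdown (VP) alphabet is a finite alphabet partitioned into calls, returns and internals; $\widetilde{\Sigma}$ has as calls/returns/internals the unions of those of $\widetilde{\Sigma}_1,\widetilde{\Sigma}_2$. Calls and returns in a word are matched like opening and closing parentheses (internals ignored); unmatched ones are pending; a word is well-matched if none are pending. A visibly pushdown automaton (VPA) is a pushdown automaton with bottom symbol $\bot$ that pushes one non-$\bot$ symbol on each call, pops the top symbol on each return (reading $\bot$ on empty stack without removing it) and leaves the stack unchanged on internals; a visibly pushdown language is one accepted by a VPA. Shuffle: $P_1\parallel P_2=\{w\in\widetilde{\Sigma}^*:\Pi_{\widetilde{\Sigma}_i}(w)\in P_i\}$ where $\Pi_{\widetilde{\Sigma}_i}$ erases letters outside $\widetilde{\Sigma}_i$. A word is well-nested if every matched call–return pair consists of two letters from the same $\widetilde{\Sigma}_k$; $\mathsf{wn}(L)$ is the set of well-nested words of $L$. $\mathbb{I}=\{(a,b):a\in\widetilde{\Sigma}_i,b\in\widetilde{\Sigma}_j,i\ne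 j\}$, $\equiv_{\mathbb{I}}$ the least reflexive transitive relation with $uabv\equiv_{\mathbb{I}}ubav$ for $(a,b)\in\mathbb{I}$. A contextual order is a map $\prec$ from $\widetilde{\Sigma}^*$ to strict total orders on $\widetilde{\Sigma}$; it induces $\preceq$ on words: $\sigma\preceq\rho$ iff $\sigma$ is a prefix of $\rho$ or $\sigma=\alpha a\beta$, $\rho=\alpha b\gamma$ with $a\prec_\alpha b$. $\mathrm{red}_\prec(L)=\{w\in L:\forall u\in L,(u\equiv_{\mathbb{I}}w\wedge u\preceq w)\Rightarrow u=w\}$. A contextual order is visibly pushdown if there is a complete deterministic VPA $A$ over $\widetilde{\Sigma}$ and a map $\mathsf{ord}$ from its states to strict total orders on $\widetilde{\Sigma}$ with $\prec_w=\mathsf{ord}(q)$, $q$ the state reached by $A$ after reading $w$, for every $w$. *)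

theory Defs
  imports Main "HOL-Library.Sublist"
begin

text \<open>A letter kind function partitions letters into calls, returns and internals.
  A VP alphabet is a finite set of letters together with this partition.\<close>

datatype letter_kind = Call | Ret | Intl

inductive well_matched :: "('a \<Rightarrow> letter_kind) \<Rightarrow> 'a list \<Rightarrow> bool"
  for \<kappa> where
  wm_nil: "well_matched \<kappa> []"
| wm_int: "\<kappa> a = Intl \<Longrightarrow> well_matched \<kappa> [a]"
| wm_app: "well_matched \<kappa> u \<Longrightarrow> well_matched \<kappa> v \<Longrightarrow> well_matched \<kappa> (u @ v)"
| wm_nest: "\<kappa> c = Call \<Longrightarrow> \<kappa> r = Ret \<Longrightarrow> well_matched \<kappa> u
             \<Longrightarrow> well_matched \<kappa> (c # u @ [r])"

definition matched_pair :: "('a \<Rightarrow> letter_kind) \<Rightarrow> 'a list \<Rightarrow> nat \<Rightarrow> nat \<Rightarrow> bool" where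
  "matched_pair \<kappa> w i j \<longleftrightarrow> i < j \<and> j < length w \<and> \<kappa> (w ! i) = Call \<and> \<kappa> (w ! j) = Ret
     \<and> well_matched \<kappa> (take (j - i - 1) (drop (i + 1) w))"

text \<open>Nondeterministic VPA. Stack symbol None on return transitions stands for
  reading the bottom symbol on an empty stack (which is not removed).\<close>
record ('q, 'g, 'a) vpa =
  states :: "'q set"
  stack_syms :: "'g set"
  initial :: "'q set"
  final :: "'q set"
  call_tr :: "('q \<times> 'a \<times> 'q \<times> 'g) set"
  ret_tr :: "('q \<times> 'a \<times> 'g option \<times> 'q) set"
  int_tr :: "('q \<times> 'a \<times> 'q) set"

definition vpa_wf :: "'a set \<Rightarrow> ('a \<Rightarrow> letter_kind) \<Rightarrow> ('q, 'g, 'a) vpa \<Rightarrow> bool" where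
  "vpa_wf \<Sigma> \<kappa> A \<longleftrightarrow> finite (states A) \<and> finite (stack_syms A)
     \<and> initial A \<subseteq> states A \<and> final A \<subseteq> states A
     \<and> (\<forall>(q, a, q', g) \<in> call_tr A. q \<in> states A \<and> a \<in> \<Sigma> \<and> \<kappa> a = Call \<and> q' \<in> states A \<and> g \<in> stack_syms A)
     \<and> (\<forall>(q, a, g, q') \<in> ret_tr A. q \<in> states A \<and> a \<in> \<Sigma> \<and> \<kappa> a = Ret \<and> q' \<in> states A
                                    \<and> g \<in> insert None (Some ` stack_syms A))
     \<and> (\<forall>(q, a, q') \<in> int_tr A. q \<in> states A \<and> a \<in> \<Sigma> \<and> \<kappa> a = Intl \<and> q' \<in> states A)"

inductive vpa_steps :: "('q, 'g, 'a) vpa \<Rightarrow> ('a \<Rightarrow> letter_kind)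
    \<Rightarrow> 'q \<times> 'g list \<Rightarrow> 'a list \<Rightarrow> 'q \<times> 'g list \<Rightarrow> bool"
  for A \<kappa> where
  st_nil: "vpa_steps A \<kappa> c [] c"
| st_call: "\<kappa> a = Call \<Longrightarrow> (q, a, q', g) \<in> call_tr A \<Longrightarrow> vpa_steps A \<kappa> (q', g # s) w c
             \<Longrightarrow> vpa_steps A \<kappa> (q, s) (a # w) c"
| st_ret: "\<kappa> a = Ret \<Longrightarrow> (q, a, Some g, q') \<in> ret_tr A \<Longrightarrow> vpa_steps A \<kappa> (q', s) w c
             \<Longrightarrow> vpa_steps A \<kappa> (q, g # s) (a # w) c"
| st_ret_bot: "\<kappa> a = Ret \<Longrightarrow> (q, a, None, q') \<in> ret_tr A \<Longrightarrow> vpa_steps A \<kappa> (q', []) w c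
             \<Longrightarrow> vpa_steps A \<kappa> (q, []) (a # w) c"
| st_int: "\<kappa> a = Intl \<Longrightarrow> (q, a, q') \<in> int_tr A \<Longrightarrow> vpa_steps A \<kappa> (q', s) w c
             \<Longrightarrow> vpa_steps A \<kappa> (q, s) (a # w) c"

definition vpa_lang :: "'a set \<Rightarrow> ('a \<Rightarrow> letter_kind) \<Rightarrow> ('q, 'g, 'a) vpa \<Rightarrow> 'a list set" where
  "vpa_lang \<Sigma> \<kappa> A = {w \<in> lists \<Sigma>. \<exists>q0 \<in> initial A. \<exists>q s.
       vpa_steps A \<kappa> (q0, []) w (q, s) \<and> q \<in> final A}"

text \<open>Visibly pushdown language over the VP alphabet (\<Sigma>, \<kappa>). States and stack symbols
  are taken from nat, which is no restriction since both sets are finite.\<close>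
definition is_vpl :: "'a set \<Rightarrow> ('a \<Rightarrow> letter_kind) \<Rightarrow> 'a list set \<Rightarrow> bool" where
  "is_vpl \<Sigma> \<kappa> L \<longleftrightarrow> (\<exists>A :: (nat, nat, 'a) vpa. vpa_wf \<Sigma> \<kappa> A \<and> vpa_lang \<Sigma> \<kappa> A = L)"

text \<open>Complete deterministic VPA (no acceptance component needed here).\<close>
record ('q, 'g, 'a) dvpa =
  dstates :: "'q set"
  dstack_syms :: "'g set"
  dinit :: 'q
  dcall :: "'q \<Rightarrow> 'a \<Rightarrow> 'q \<times> 'g"
  dret :: "'q \<Rightarrow> 'a \<Rightarrow> 'g option \<Rightarrow> 'q"
  dint :: "'q \<Rightarrow> 'a \<Rightarrow> 'q"

definition dvpa_wf :: "'a set \<Rightarrow> ('a \<Rightarrow> letter_kind) \<Rightarrow> ('q, 'g, 'a) dvpa \<Rightarrow> bool" where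
  "dvpa_wf \<Sigma> \<kappa> D \<longleftrightarrow> finite (dstates D) \<and> finite (dstack_syms D) \<and> dinit D \<in> dstates D
     \<and> (\<forall>q \<in> dstates D. \<forall>a \<in> \<Sigma>.
          (\<kappa> a = Call \<longrightarrow> fst (dcall D q a) \<in> dstates D \<and> snd (dcall D q a) \<in> dstack_syms D)
        \<and> (\<kappa> a = Ret \<longrightarrow> (\<forall>g \<in> insert None (Some ` dstack_syms D). dret D q a g \<in> dstates D))
        \<and> (\<kappa> a = Intl \<longrightarrow> dint D q a \<in> dstates D))"

fun dvpa_run :: "('q, 'g, 'a) dvpa \<Rightarrow> ('a \<Rightarrow> letter_kind) \<Rightarrow> 'q \<times> 'g list \<Rightarrow> 'a list \<Rightarrow> 'q \<times> 'g list" where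
  "dvpa_run D \<kappa> c [] = c"
| "dvpa_run D \<kappa> (q, s) (a # w) =
     (case \<kappa> a of
        Call \<Rightarrow> dvpa_run D \<kappa> (fst (dcall D q a), snd (dcall D q a) # s) w
      | Ret \<Rightarrow> (case s of
                  [] \<Rightarrow> dvpa_run D \<kappa> (dret D q a None, []) w
                | g # s' \<Rightarrow> dvpa_run D \<kappa> (dret D q a (Some g), s') w)
      | Intl \<Rightarrow> dvpa_run D \<kappa> (dint D q a, s) w)"

definition dvpa_state :: "('q, 'g, 'a) dvpa \<Rightarrow> ('a \<Rightarrow> letter_kind) \<Rightarrow> 'a list \<Rightarrow> 'q" where
  "dvpa_state D \<kappa> w = fst (dvpa_run D \<kappa> (dinit D, []) w)"

definition shuffle :: "'a set \<Rightarrow> 'a set \<Rightarrow> 'a list set \<Rightarrow> 'a list set \<Rightarrow> 'a list set" where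
  "shuffle \<Sigma>1 \<Sigma>2 P1 P2 = {w \<in> lists (\<Sigma>1 \<union> \<Sigma>2).
      filter (\<lambda>x. x \<in> \<Sigma>1) w \<in> P1 \<and> filter (\<lambda>x. x \<in> \<Sigma>2) w \<in> P2}"

definition well_nested :: "'a set \<Rightarrow> 'a set \<Rightarrow> ('a \<Rightarrow> letter_kind) \<Rightarrow> 'a list \<Rightarrow> bool" where
  "well_nested \<Sigma>1 \<Sigma>2 \<kappa> w \<longleftrightarrow> (\<forall>i j. matched_pair \<kappa> w i j \<longrightarrow>
      (w ! i \<in> \<Sigma>1 \<and> w ! j \<in> \<Sigma>1) \<or> (w ! i \<in> \<Sigma>2 \<and> w ! j \<in> \<Sigma>2))"

definition wn :: "'a set \<Rightarrow> 'a set \<Rightarrow> ('a \<Rightarrow> letter_kind) \<Rightarrow> 'a list set \<Rightarrow> 'a list set" where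
  "wn \<Sigma>1 \<Sigma>2 \<kappa> L = {w \<in> L. well_nested \<Sigma>1 \<Sigma>2 \<kappa> w}"

definition indep :: "'a set \<Rightarrow> 'a set \<Rightarrow> 'a \<Rightarrow> 'a \<Rightarrow> bool" where
  "indep \<Sigma>1 \<Sigma>2 a b \<longleftrightarrow> (a \<in> \<Sigma>1 \<and> b \<in> \<Sigma>2) \<or> (a \<in> \<Sigma>2 \<and> b \<in> \<Sigma>1)"

definition swap_step :: "'a set \<Rightarrow> 'a set \<Rightarrow> 'a list \<Rightarrow> 'a list \<Rightarrow> bool" where
  "swap_step \<Sigma>1 \<Sigma>2 x y \<longleftrightarrow> (\<exists>u a b v. indep \<Sigma>1 \<Sigma>2 a b \<and> x = u @ a # b # v \<and> y = u @ b # a # v)"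

definition indep_equiv :: "'a set \<Rightarrow> 'a set \<Rightarrow> 'a list \<Rightarrow> 'a list \<Rightarrow> bool" where
  "indep_equiv \<Sigma>1 \<Sigma>2 = (swap_step \<Sigma>1 \<Sigma>2)\<^sup>*\<^sup>*"

definition strict_total_on :: "'a set \<Rightarrow> ('a \<Rightarrow> 'a \<Rightarrow> bool) \<Rightarrow> bool" where
  "strict_total_on S R \<longleftrightarrow>
     (\<forall>a \<in> S. \<not> R a a)
   \<and> (\<forall>a \<in> S. \<forall>b \<in> S. \<forall>c \<in> S. R a b \<longrightarrow> R b c \<longrightarrow> R a c)
   \<and> (\<forall>a \<in> S. \<forall>b \<in> S. a \<noteq> b \<longrightarrow> R a b \<or> R b a)"

definition contextual_order :: "'a set \<Rightarrow> ('a list \<Rightarrow> 'a \<Rightarrow> 'a \<Rightarrow> bool) \<Rightarrow> bool" where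
  "contextual_order \<Sigma> prec \<longleftrightarrow> (\<forall>w \<in> lists \<Sigma>. strict_total_on \<Sigma> (prec w))"

definition word_le :: "('a list \<Rightarrow> 'a \<Rightarrow> 'a \<Rightarrow> bool) \<Rightarrow> 'a list \<Rightarrow> 'a list \<Rightarrow> bool" where
  "word_le prec \<sigma> \<rho> \<longleftrightarrow> prefix \<sigma> \<rho> \<or>
     (\<exists>\<alpha> a b \<beta> \<gamma>. \<sigma> = \<alpha> @ a # \<beta> \<and> \<rho> = \<alpha> @ b # \<gamma> \<and> prec \<alpha> a b)"

definition red :: "'a set \<Rightarrow> 'a set \<Rightarrow> ('a list \<Rightarrow> 'a \<Rightarrow> 'a \<Rightarrow> bool) \<Rightarrow> 'a list set \<Rightarrow> 'a list set" where
  "red \<Sigma>1 \<Sigma>2 prec L = {w \<in> L. \<forall>u \<in> L.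
      (indep_equiv \<Sigma>1 \<Sigma>2 u w \<and> word_le prec u w) \<longrightarrow> u = w}"

definition vp_contextual_order :: "'a set \<Rightarrow> ('a \<Rightarrow> letter_kind) \<Rightarrow> ('a list \<Rightarrow> 'a \<Rightarrow> 'a \<Rightarrow> bool) \<Rightarrow> bool" where
  "vp_contextual_order \<Sigma> \<kappa> prec \<longleftrightarrow> contextual_order \<Sigma> prec \<and>
     (\<exists>(D :: (nat, nat, 'a) dvpa) (ord :: nat \<Rightarrow> 'a \<Rightarrow> 'a \<Rightarrow> bool).
        dvpa_wf \<Sigma> \<kappa> D \<and> (\<forall>w \<in> lists \<Sigma>. prec w = ord (dvpa_state D \<kappa> w)))"

end

theory Submission
  imports Defs
begin


lemma steps_append:
  "vpa_steps A \<kappa> c x c' \<Longrightarrow> vpa_steps A \<kappa> c' y c'' \<Longrightarrow> vpa_steps A \<kappa> c (x@y) c''"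
  by (induction rule: vpa_steps.induct) (auto intro: vpa_steps.intros)

lemma steps_Cons_iff:
  "vpa_steps A \<kappa> (q,s) (a#w) c \<longleftrightarrow>
    (\<kappa> a = Call \<and> (\<exists>q' g. (q,a,q',g) \<in> call_tr A \<and> vpa_steps A \<kappa> (q', g#s) w c))
  \<or> (\<kappa> a = Ret \<and> (\<exists>g s' q'. s = g#s' \<and> (q,a,Some g,q') \<in> ret_tr A \<and> vpa_steps A \<kappa> (q',s') w c))
  \<or> (\<kappa> a = Ret \<and> s = [] \<and> (\<exists>q'. (q,a,None,q') \<in> ret_tr A \<and> vpa_steps A \<kappa> (q',[]) w c))
  \<or> (\<kappa> a = Intl \<and> (\<exists>q'. (q,a,q') \<in> int_tr A \<and> vpa_steps A \<kappa> (q',s) w c))"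
  apply (rule iffI)
   apply (erule vpa_steps.cases; auto)
  apply (auto intro: vpa_steps.intros)
  done

lemma steps_Nil_iff: "vpa_steps A \<kappa> c [] c' \<longleftrightarrow> c' = c"
  by (auto elim: vpa_steps.cases intro: vpa_steps.intros)

lemma steps_appendD:
  "vpa_steps A \<kappa> c (x@y) c'' \<Longrightarrow> \<exists>c'. vpa_steps A \<kappa> c x c' \<and> vpa_steps A \<kappa> c' y c''"
proof (induction x arbitrary: c)
  case Nil then show ?case by (cases c) (auto intro: vpa_steps.intros)
next
  case (Cons a x)
  obtain q s where c: "c = (q,s)" by force
  from Cons.prems show ?case unfolding c
    apply (simp only: append_Cons steps_Cons_iff)
    apply (elim disjE conjE exE)
    subgoal for q' g using Cons.IH[of "(q', g#s)"] by (auto simp: steps_Cons_iff)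
    subgoal for g s' q' using Cons.IH[of "(q', s')"] by (auto simp: steps_Cons_iff)
    subgoal for q' using Cons.IH[of "(q', [])"] by (auto simp: steps_Cons_iff)
    subgoal for q' using Cons.IH[of "(q', s)"] by (auto simp: steps_Cons_iff)
    done
qed

lemma dvpa_run_append:
  "dvpa_run D \<kappa> c (x@y) = dvpa_run D \<kappa> (dvpa_run D \<kappa> c x) y"
proof (induction x arbitrary: c)
  case Nil then show ?case by simp
next
  case (Cons a x)
  obtain q s where c: "c = (q,s)" by force
  show ?case unfolding c using Cons.IH
    by (cases "\<kappa> a"; cases s; simp)
qed

definition ren :: "('q \<Rightarrow> nat) \<Rightarrow> ('g \<Rightarrow> nat) \<Rightarrow> ('q,'g,'a) vpa \<Rightarrow> (nat,nat,'a) vpa" where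
  "ren f h A = \<lparr> states = f ` states A, stack_syms = h ` stack_syms A,
     initial = f ` initial A, final = f ` final A,
     call_tr = (\<lambda>(q,a,q',g). (f q, a, f q', h g)) ` call_tr A,
     ret_tr = (\<lambda>(q,a,g,q'). (f q, a, map_option h g, f q')) ` ret_tr A,
     int_tr = (\<lambda>(q,a,q'). (f q, a, f q')) ` int_tr A \<rparr>"

lemma ren_fwd:
  "vpa_steps A \<kappa> c w c' \<Longrightarrow> vpa_steps (ren f h A) \<kappa> (f (fst c), map h (snd c)) w (f (fst c'), map h (snd c'))"
proof (induction rule: vpa_steps.induct)
  case (st_nil c) then show ?case by (auto intro: vpa_steps.intros)
next
  case (st_call a q q' g s w c)
  have "(f q, a, f q', h g) \<in> call_tr (ren f h A)" using st_call(2) by (force simp: ren_def)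
  then show ?case using st_call by (auto intro: vpa_steps.intros)
next
  case (st_ret a q g q' s w c)
  have "(f q, a, Some (h g), f q') \<in> ret_tr (ren f h A)" using st_ret(2) by (force simp: ren_def)
  then show ?case using st_ret by (auto intro: vpa_steps.intros)
next
  case (st_ret_bot a q q' w c)
  have "(f q, a, None, f q') \<in> ret_tr (ren f h A)" using st_ret_bot(2) by (force simp: ren_def)
  then show ?case using st_ret_bot by (auto intro: vpa_steps.intros)
next
  case (st_int a q q' s w c)
  have "(f q, a, f q') \<in> int_tr (ren f h A)" using st_int(2) by (force simp: ren_def)
  then show ?case using st_int by (auto intro: vpa_steps.intros)
qed

lemma ren_bwd:
  assumes wf: "vpa_wf \<Sigma> \<kappa> A" and fi: "inj_on f (states A)" and hi: "inj_on h (stack_syms A)"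
  shows "vpa_steps (ren f h A) \<kappa> c w c' \<Longrightarrow> fst c \<in> f ` states A \<Longrightarrow> set (snd c) \<subseteq> h ` stack_syms A \<Longrightarrow>
    fst c' \<in> f ` states A \<and>
    vpa_steps A \<kappa> (inv_into (states A) f (fst c), map (inv_into (stack_syms A) h) (snd c)) w
        (inv_into (states A) f (fst c'), map (inv_into (stack_syms A) h) (snd c'))"
proof (induction rule: vpa_steps.induct)
  case (st_nil c) then show ?case by (auto intro: vpa_steps.intros)
next
  case (st_call a p p' g s w c)
  from st_call(2) obtain q q' g0 where tr: "(q,a,q',g0) \<in> call_tr A" and e: "p = f q" "p' = f q'" "g = h g0"
    by (auto simp: ren_def)
  have mem: "q \<in> states A" "q' \<in> states A" "g0 \<in> stack_syms A" using tr wf by (auto simp: vpa_wf_def)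
  have IH: "fst c \<in> f ` states A \<and> vpa_steps A \<kappa> (inv_into (states A) f p', map (inv_into (stack_syms A) h) (g # s)) w
        (inv_into (states A) f (fst c), map (inv_into (stack_syms A) h) (snd c))"
    using st_call mem e by auto
  have "inv_into (states A) f p' = q'" "inv_into (states A) f p = q" "inv_into (stack_syms A) h g = g0"
    using e mem fi hi by (auto simp: inv_into_f_f)
  then show ?case using IH tr st_call(1) by (auto intro: vpa_steps.intros)
next
  case (st_ret a p g p' s w c)
  from st_ret(2) obtain q q' go where tr0: "(q,a,go,q') \<in> ret_tr A" and e0: "p = f q" "p' = f q'" "Some g = map_option h go"
    by (auto simp: ren_def)
  then obtain g0 where "go = Some g0" "g = h g0" by (cases go) auto
  then have tr: "(q,a,Some g0,q') \<in> ret_tr A" and e: "p = f q" "p' = f q'" "g = h g0" using tr0 e0 by auto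
  have mem: "q \<in> states A" "q' \<in> states A" "g0 \<in> stack_syms A" using tr wf by (auto simp: vpa_wf_def)
  have IH: "fst c \<in> f ` states A \<and> vpa_steps A \<kappa> (inv_into (states A) f p', map (inv_into (stack_syms A) h) s) w
        (inv_into (states A) f (fst c), map (inv_into (stack_syms A) h) (snd c))"
    using st_ret mem e by auto
  have "inv_into (states A) f p' = q'" "inv_into (states A) f p = q" "inv_into (stack_syms A) h g = g0"
    using e mem fi hi by (auto simp: inv_into_f_f)
  then show ?case using IH tr st_ret(1) by (auto intro: vpa_steps.intros)
next
  case (st_ret_bot a p p' w c)
  from st_ret_bot(2) obtain q q' go where tr0: "(q,a,go,q') \<in> ret_tr A" and e0: "p = f q" "p' = f q'" "None = map_option h go"
    by (auto simp: ren_def)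
  then have tr: "(q,a,None,q') \<in> ret_tr A" and e: "p = f q" "p' = f q'" by auto
  have mem: "q \<in> states A" "q' \<in> states A" using tr wf by (auto simp: vpa_wf_def)
  have IH: "fst c \<in> f ` states A \<and> vpa_steps A \<kappa> (inv_into (states A) f p', []) w
        (inv_into (states A) f (fst c), map (inv_into (stack_syms A) h) (snd c))"
    using st_ret_bot mem e by auto
  have "inv_into (states A) f p' = q'" "inv_into (states A) f p = q"
    using e mem fi hi by (auto simp: inv_into_f_f)
  then show ?case using IH tr st_ret_bot(1) by (auto intro: vpa_steps.intros)
next
  case (st_int a p p' s w c)
  from st_int(2) obtain q q' where tr: "(q,a,q') \<in> int_tr A" and e: "p = f q" "p' = f q'"
    by (auto simp: ren_def)
  have mem: "q \<in> states A" "q' \<in> states A" using tr wf by (auto simp: vpa_wf_def)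
  have IH: "fst c \<in> f ` states A \<and> vpa_steps A \<kappa> (inv_into (states A) f p', map (inv_into (stack_syms A) h) s) w
        (inv_into (states A) f (fst c), map (inv_into (stack_syms A) h) (snd c))"
    using st_int mem e by auto
  have "inv_into (states A) f p' = q'" "inv_into (states A) f p = q"
    using e mem fi hi by (auto simp: inv_into_f_f)
  then show ?case using IH tr st_int(1) by (auto intro: vpa_steps.intros)
qed

lemma wf_is_vpl:
  fixes A :: "('q,'g,'a) vpa"
  assumes wf: "vpa_wf \<Sigma> \<kappa> A"
  shows "is_vpl \<Sigma> \<kappa> (vpa_lang \<Sigma> \<kappa> A)"
proof -
  have fs: "finite (states A)" "finite (stack_syms A)" using wf by (auto simp: vpa_wf_def)
  obtain f :: "'q \<Rightarrow> nat" where fi: "inj_on f (states A)" using finite_imp_inj_to_nat_seg[OF fs(1)] by blast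
  obtain h :: "'g \<Rightarrow> nat" where hi: "inj_on h (stack_syms A)" using finite_imp_inj_to_nat_seg[OF fs(2)] by blast
  let ?B = "ren f h A"
  have wfB: "vpa_wf \<Sigma> \<kappa> ?B"
    using wf unfolding vpa_wf_def ren_def by (auto 0 3)
  have "vpa_lang \<Sigma> \<kappa> ?B = vpa_lang \<Sigma> \<kappa> A"
  proof (intro set_eqI iffI)
    fix w assume "w \<in> vpa_lang \<Sigma> \<kappa> A"
    then obtain q0 q s where w: "w \<in> lists \<Sigma>" "q0 \<in> initial A" "vpa_steps A \<kappa> (q0, []) w (q, s)" "q \<in> final A"
      unfolding vpa_lang_def by blast
    from ren_fwd[OF w(3), of f h] w show "w \<in> vpa_lang \<Sigma> \<kappa> ?B"
      unfolding vpa_lang_def by (force simp: ren_def)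
  next
    fix w assume "w \<in> vpa_lang \<Sigma> \<kappa> ?B"
    then obtain p0 p t where w: "w \<in> lists \<Sigma>" "p0 \<in> initial ?B" "vpa_steps ?B \<kappa> (p0, []) w (p, t)" "p \<in> final ?B"
      unfolding vpa_lang_def by blast
    from w(2) obtain q0 where q0: "q0 \<in> initial A" "p0 = f q0" by (auto simp: ren_def)
    from w(4) obtain qf where qf: "qf \<in> final A" "p = f qf" by (auto simp: ren_def)
    have mem: "q0 \<in> states A" "qf \<in> states A" using q0 qf wf by (auto simp: vpa_wf_def)
    from ren_bwd[OF wf fi hi w(3)] q0 mem
    have "vpa_steps A \<kappa> (q0, []) w (inv_into (states A) f p, map (inv_into (stack_syms A) h) t)"
      by (simp add: inv_into_f_f fi)
    moreover have "inv_into (states A) f p = qf" using qf mem fi by (simp add: inv_into_f_f)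
    ultimately show "w \<in> vpa_lang \<Sigma> \<kappa> A" unfolding vpa_lang_def using w(1) q0 qf by blast
  qed
  then show ?thesis using wfB unfolding is_vpl_def by metis
qed



fun pendr :: "('a \<Rightarrow> letter_kind) \<Rightarrow> 'a list \<Rightarrow> 'a list" where
  "pendr \<kappa> [] = []"
| "pendr \<kappa> (a#xs) = (case \<kappa> a of Call \<Rightarrow> a # pendr \<kappa> xs | Ret \<Rightarrow> tl (pendr \<kappa> xs) | Intl \<Rightarrow> pendr \<kappa> xs)"

definition pend :: "('a \<Rightarrow> letter_kind) \<Rightarrow> 'a list \<Rightarrow> 'a list" where
  "pend \<kappa> x = pendr \<kappa> (rev x)"

lemma pend_Nil[simp]: "pend \<kappa> [] = []" by (simp add: pend_def)
lemma pend_snoc[simp]: "pend \<kappa> (x@[a]) = (case \<kappa> a of Call \<Rightarrow> a # pend \<kappa> x | Ret \<Rightarrow> tl (pend \<kappa> x) | Intl \<Rightarrow> pend \<kappa> x)"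
  unfolding pend_def by simp

lemma pend_calls: "c \<in> set (pend \<kappa> x) \<Longrightarrow> \<kappa> c = Call"
proof (induction x rule: rev_induct)
  case Nil then show ?case by simp
next
  case (snoc a x)
  then show ?case by (cases "\<kappa> a"; cases "pend \<kappa> x") auto
qed

definition hh :: "('a \<Rightarrow> letter_kind) \<Rightarrow> 'a list \<Rightarrow> int" where
  "hh \<kappa> x = int (length (filter (\<lambda>c. \<kappa> c = Call) x)) - int (length (filter (\<lambda>c. \<kappa> c = Ret) x))"

lemma hh_Nil[simp]: "hh \<kappa> [] = 0" by (simp add: hh_def)
lemma hh_Cons[simp]: "hh \<kappa> (a#x) = (case \<kappa> a of Call \<Rightarrow> 1 | Ret \<Rightarrow> -1 | Intl \<Rightarrow> 0) + hh \<kappa> x"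
  by (cases "\<kappa> a") (auto simp: hh_def)
lemma hh_append[simp]: "hh \<kappa> (x@y) = hh \<kappa> x + hh \<kappa> y"
  by (simp add: hh_def)

lemma pend_len: "hh \<kappa> x \<le> int (length (pend \<kappa> x))"
proof (induction x rule: rev_induct)
  case Nil then show ?case by simp
next
  case (snoc a x)
  then show ?case by (cases "\<kappa> a") auto
qed

lemma wm_h: "well_matched \<kappa> u \<Longrightarrow> hh \<kappa> u = 0 \<and> (\<forall>p. prefix p u \<longrightarrow> 0 \<le> hh \<kappa> p)"
proof (induction rule: well_matched.induct)
  case wm_nil then show ?case by simp
next
  case (wm_int a) then show ?case by (auto simp: prefix_Cons)
next
  case (wm_app u v) then show ?case by (auto simp: prefix_append)
next
  case (wm_nest c r u)
  show ?case
  proof (intro conjI allI impI)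
    show "hh \<kappa> (c # u @ [r]) = 0" using wm_nest by simp
  next
    fix p assume "prefix p (c # u @ [r])"
    then consider "p = []" | p' where "p = c # p'" "prefix p' u" | "p = c # u @ [r]"
      by (auto simp: prefix_Cons prefix_append)
    then show "0 \<le> hh \<kappa> p" using wm_nest by cases auto
  qed
qed

lemma hh_filter: "hh \<kappa> p = hh \<kappa> (filter P p) + hh \<kappa> (filter (\<lambda>x. \<not> P x) p)"
  by (induction p) auto

lemma pend_dec: "pend \<kappa> x = c # rest \<Longrightarrow> \<exists>x1 z. x = x1 @ c # z \<and> well_matched \<kappa> z \<and> pend \<kappa> x1 = rest"
proof (induction "length x" arbitrary: x c rest rule: less_induct)
  case less
  show ?case
  proof (cases x rule: rev_exhaust)
    case Nil then show ?thesis using less.prems by simp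
  next
    case (snoc x0 b)
    show ?thesis
    proof (cases "\<kappa> b")
      case Call
      then show ?thesis using less.prems snoc by (auto intro: wm_nil)
    next
      case Intl
      then have "pend \<kappa> x0 = c # rest" using less.prems snoc by simp
      then obtain x1 z where "x0 = x1 @ c # z" "well_matched \<kappa> z" "pend \<kappa> x1 = rest"
        using less.hyps[of x0] snoc by auto
      moreover have "well_matched \<kappa> (z @ [b])" using \<open>well_matched \<kappa> z\<close> Intl
        by (intro wm_app wm_int)
      ultimately show ?thesis using snoc by (intro exI[of _ x1] exI[of _ "z@[b]"]) auto
    next
      case Ret
      then have "tl (pend \<kappa> x0) = c # rest" using less.prems snoc by simp
      then obtain c' where p0: "pend \<kappa> x0 = c' # c # rest" by (cases "pend \<kappa> x0") auto
      then have cc: "\<kappa> c' = Call" using pend_calls[of c' \<kappa> x0] by simp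
      obtain x1' z' where d1: "x0 = x1' @ c' # z'" "well_matched \<kappa> z'" "pend \<kappa> x1' = c # rest"
        using less.hyps[of x0, OF _ p0] snoc by auto
      obtain x1 z'' where d2: "x1' = x1 @ c # z''" "well_matched \<kappa> z''" "pend \<kappa> x1 = rest"
        using less.hyps[of x1', OF _ d1(3)] snoc d1(1) by auto
      have "well_matched \<kappa> (z'' @ (c' # z' @ [b]))"
        using d2(2) d1(2) cc Ret by (intro wm_app wm_nest)
      then show ?thesis using snoc d1 d2 by (intro exI[of _ x1] exI[of _ "z'' @ (c' # z' @ [b])"]) auto
    qed
  qed
qed

lemma align:
  assumes w: "w \<in> lists (\<Sigma>1 \<union> \<Sigma>2)" and disj: "\<Sigma>1 \<inter> \<Sigma>2 = {}"
    and wm1: "well_matched \<kappa> (filter (\<lambda>x. x \<in> \<Sigma>1) w)" and wm2: "well_matched \<kappa> (filter (\<lambda>x. x \<in> \<Sigma>2) w)"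
    and wn: "well_nested \<Sigma>1 \<Sigma>2 \<kappa> w" and dec: "w = x @ a # y" and r: "\<kappa> a = Ret"
  shows "pend \<kappa> x \<noteq> [] \<and> (hd (pend \<kappa> x) \<in> \<Sigma>1 \<longleftrightarrow> a \<in> \<Sigma>1)"
proof -
  let ?p = "x @ [a]"
  have pl: "?p \<in> lists (\<Sigma>1 \<union> \<Sigma>2)" using w dec by auto
  have f2: "filter (\<lambda>c. \<not> c \<in> \<Sigma>1) ?p = filter (\<lambda>c. c \<in> \<Sigma>2) ?p"
    using pl disj by (intro filter_cong) auto
  have "prefix (filter (\<lambda>c. c \<in> \<Sigma>1) ?p) (filter (\<lambda>c. c \<in> \<Sigma>1) w)"
    unfolding dec by (simp add: prefix_def)
  then have h1: "0 \<le> hh \<kappa> (filter (\<lambda>c. c \<in> \<Sigma>1) ?p)" using wm_h[OF wm1] by blast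
  have "prefix (filter (\<lambda>c. c \<in> \<Sigma>2) ?p) (filter (\<lambda>c. c \<in> \<Sigma>2) w)"
    unfolding dec by (simp add: prefix_def)
  then have h2: "0 \<le> hh \<kappa> (filter (\<lambda>c. c \<in> \<Sigma>2) ?p)" using wm_h[OF wm2] by blast
  have "hh \<kappa> ?p = hh \<kappa> (filter (\<lambda>c. c \<in> \<Sigma>1) ?p) + hh \<kappa> (filter (\<lambda>c. c \<in> \<Sigma>2) ?p)"
    using hh_filter[of \<kappa> ?p "\<lambda>c. c \<in> \<Sigma>1"] f2 by metis
  then have "hh \<kappa> ?p \<ge> 0" using h1 h2 by linarith
  then have "hh \<kappa> x \<ge> 1" using r by simp
  then have ne: "pend \<kappa> x \<noteq> []" using pend_len[of \<kappa> x] by auto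
  then obtain c rest where pc: "pend \<kappa> x = c # rest" by (cases "pend \<kappa> x") auto
  then obtain x1 z where d: "x = x1 @ c # z" "well_matched \<kappa> z" by (metis pend_dec)
  have cc: "\<kappa> c = Call" using pend_calls[of c \<kappa> x] pc by simp
  have mp: "matched_pair \<kappa> w (length x1) (length x)"
    unfolding matched_pair_def using d dec cc r by (simp add: nth_append)
  have "(w!(length x1) \<in> \<Sigma>1 \<and> w!(length x) \<in> \<Sigma>1) \<or> (w!(length x1) \<in> \<Sigma>2 \<and> w!(length x) \<in> \<Sigma>2)"
    using wn mp unfolding well_nested_def by blast
  moreover have "w!(length x1) = c" "w!(length x) = a" using d dec by (simp_all add: nth_append)
  ultimately have "(c \<in> \<Sigma>1 \<and> a \<in> \<Sigma>1) \<or> (c \<in> \<Sigma>2 \<and> a \<in> \<Sigma>2)" by simp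
  then show ?thesis using ne pc disj by auto
qed



locale twoalph =
  fixes \<Sigma>1 \<Sigma>2 :: "'a set" and prec :: "'a list \<Rightarrow> 'a \<Rightarrow> 'a \<Rightarrow> bool"
  assumes disj: "\<Sigma>1 \<inter> \<Sigma>2 = {}" and co: "contextual_order (\<Sigma>1 \<union> \<Sigma>2) prec"
begin

fun ok :: "'a list \<Rightarrow> 'a list \<Rightarrow> 'a set \<Rightarrow> 'a set \<Rightarrow> bool" where
  "ok \<alpha> [] F1 F2 = True"
| "ok \<alpha> (b#w) F1 F2 = (if b \<in> \<Sigma>1 then b \<notin> F1 \<and> ok (\<alpha>@[b]) w {} (F2 \<union> {a\<in>\<Sigma>2. prec \<alpha> a b})
     else if b \<in> \<Sigma>2 then b \<notin> F2 \<and> ok (\<alpha>@[b]) w (F1 \<union> {a\<in>\<Sigma>1. prec \<alpha> a b}) {} else False)"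

definition badd :: "'a list \<Rightarrow> bool" where
  "badd w \<longleftrightarrow> (\<exists>\<alpha> b v a y. w = \<alpha>@b#v@a#y \<and>
     ((b \<in> \<Sigma>2 \<and> set v \<subseteq> \<Sigma>2 \<and> a \<in> \<Sigma>1) \<or> (b \<in> \<Sigma>1 \<and> set v \<subseteq> \<Sigma>1 \<and> a \<in> \<Sigma>2)) \<and> prec \<alpha> a b)"

lemma ok_split: "ok \<alpha> (x@y) F1 F2 \<Longrightarrow> \<exists>F1' F2'. ok (\<alpha>@x) y F1' F2'"
proof (induction x arbitrary: \<alpha> F1 F2)
  case Nil then show ?case by auto
next
  case (Cons b x)
  then show ?case by (auto split: if_splits) (metis append.assoc append_Cons append_Nil)+
qed

lemma ok_carry1: "set v \<subseteq> \<Sigma>2 \<Longrightarrow> a \<in> \<Sigma>1 \<Longrightarrow> ok \<beta> (v@a#y) G1 G2 \<Longrightarrow> a \<notin> G1"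
proof (induction v arbitrary: \<beta> G1 G2)
  case Nil then show ?case by auto
next
  case (Cons c v)
  have "c \<notin> \<Sigma>1" "c \<in> \<Sigma>2" using Cons.prems disj by auto
  then show ?case using Cons by fastforce
qed

lemma ok_carry2: "set v \<subseteq> \<Sigma>1 \<Longrightarrow> a \<in> \<Sigma>2 \<Longrightarrow> ok \<beta> (v@a#y) G1 G2 \<Longrightarrow> a \<notin> G2"
proof (induction v arbitrary: \<beta> G1 G2)
  case Nil
  then have "a \<notin> \<Sigma>1" using disj by auto
  then show ?case using Nil by auto
next
  case (Cons c v)
  have "c \<in> \<Sigma>1" using Cons.prems by auto
  then show ?case using Cons by fastforce
qed

lemma ok_nobad: "ok [] w {} {} \<Longrightarrow> \<not> badd w"
proof
  assume o: "ok [] w {} {}" and "badd w"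
  then obtain \<alpha> b v a y where w: "w = \<alpha>@b#v@a#y" and
    c: "(b \<in> \<Sigma>2 \<and> set v \<subseteq> \<Sigma>2 \<and> a \<in> \<Sigma>1) \<or> (b \<in> \<Sigma>1 \<and> set v \<subseteq> \<Sigma>1 \<and> a \<in> \<Sigma>2)" and p: "prec \<alpha> a b"
    unfolding badd_def by blast
  from ok_split[of "[]" \<alpha> "b#v@a#y"] o w obtain F1 F2 where o2: "ok \<alpha> (b#v@a#y) F1 F2"
    by (metis append_Nil)
  from c show False
  proof
    assume h: "b \<in> \<Sigma>2 \<and> set v \<subseteq> \<Sigma>2 \<and> a \<in> \<Sigma>1"
    then have "b \<notin> \<Sigma>1" using disj by auto
    then have "ok (\<alpha>@[b]) (v@a#y) (F1 \<union> {a\<in>\<Sigma>1. prec \<alpha> a b}) {}" using o2 h by simp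
    then have "a \<notin> F1 \<union> {a\<in>\<Sigma>1. prec \<alpha> a b}" using ok_carry1 h by blast
    then show False using p h by auto
  next
    assume h: "b \<in> \<Sigma>1 \<and> set v \<subseteq> \<Sigma>1 \<and> a \<in> \<Sigma>2"
    then have "ok (\<alpha>@[b]) (v@a#y) {} (F2 \<union> {a\<in>\<Sigma>2. prec \<alpha> a b})" using o2 h by simp
    then have "a \<notin> F2 \<union> {a\<in>\<Sigma>2. prec \<alpha> a b}" using ok_carry2 h by blast
    then show False using p h by auto
  qed
qed

definition inv1 :: "'a list \<Rightarrow> 'a set \<Rightarrow> bool" where
  "inv1 \<alpha> F \<longleftrightarrow> (\<forall>a\<in>F. a \<in> \<Sigma>1 \<and> (\<exists>\<alpha>1 b v. \<alpha> = \<alpha>1@b#v \<and> b \<in> \<Sigma>2 \<and> set v \<subseteq> \<Sigma>2 \<and> prec \<alpha>1 a b))"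
definition inv2 :: "'a list \<Rightarrow> 'a set \<Rightarrow> bool" where
  "inv2 \<alpha> F \<longleftrightarrow> (\<forall>a\<in>F. a \<in> \<Sigma>2 \<and> (\<exists>\<alpha>1 b v. \<alpha> = \<alpha>1@b#v \<and> b \<in> \<Sigma>1 \<and> set v \<subseteq> \<Sigma>1 \<and> prec \<alpha>1 a b))"

lemma bad_of_notok: "\<not> ok \<alpha> w F1 F2 \<Longrightarrow> w \<in> lists (\<Sigma>1 \<union> \<Sigma>2) \<Longrightarrow> inv1 \<alpha> F1 \<Longrightarrow> inv2 \<alpha> F2 \<Longrightarrow> badd (\<alpha>@w)"
proof (induction w arbitrary: \<alpha> F1 F2)
  case Nil then show ?case by simp
next
  case (Cons c w)
  show ?case
  proof (cases "c \<in> \<Sigma>1")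
    case True
    then have nc: "c \<notin> \<Sigma>2" using disj by auto
    show ?thesis
    proof (cases "c \<in> F1")
      case cF: True
      then obtain \<alpha>1 b v where "\<alpha> = \<alpha>1@b#v" "b \<in> \<Sigma>2" "set v \<subseteq> \<Sigma>2" "prec \<alpha>1 c b"
        using Cons.prems(3) unfolding inv1_def by blast
      then show ?thesis unfolding badd_def using True
        by (intro exI[of _ \<alpha>1] exI[of _ b] exI[of _ v] exI[of _ c] exI[of _ w]) auto
    next
      case False
      then have n: "\<not> ok (\<alpha>@[c]) w {} (F2 \<union> {a\<in>\<Sigma>2. prec \<alpha> a c})" using Cons.prems True by simp
      have i2: "inv2 (\<alpha>@[c]) (F2 \<union> {a\<in>\<Sigma>2. prec \<alpha> a c})"
        unfolding inv2_def
      proof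
        fix a assume "a \<in> F2 \<union> {a\<in>\<Sigma>2. prec \<alpha> a c}"
        then show "a \<in> \<Sigma>2 \<and> (\<exists>\<alpha>1 b v. \<alpha>@[c] = \<alpha>1@b#v \<and> b \<in> \<Sigma>1 \<and> set v \<subseteq> \<Sigma>1 \<and> prec \<alpha>1 a b)"
        proof
          assume "a \<in> F2"
          then obtain \<alpha>1 b v where "a \<in> \<Sigma>2" "\<alpha> = \<alpha>1@b#v" "b \<in> \<Sigma>1" "set v \<subseteq> \<Sigma>1" "prec \<alpha>1 a b"
            using Cons.prems(4) unfolding inv2_def by blast
          then show ?thesis using True by (intro conjI exI[of _ \<alpha>1] exI[of _ b] exI[of _ "v@[c]"]) auto
        next
          assume "a \<in> {a\<in>\<Sigma>2. prec \<alpha> a c}"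
          then show ?thesis using True by (intro conjI exI[of _ \<alpha>] exI[of _ c] exI[of _ "[]"]) auto
        qed
      qed
      have "inv1 (\<alpha>@[c]) {}" by (simp add: inv1_def)
      then have "badd ((\<alpha>@[c])@w)" using Cons.IH[OF n] Cons.prems(2) i2 by simp
      then show ?thesis by simp
    qed
  next
    case False
    then have c2: "c \<in> \<Sigma>2" using Cons.prems(2) by auto
    show ?thesis
    proof (cases "c \<in> F2")
      case cF: True
      then obtain \<alpha>1 b v where "\<alpha> = \<alpha>1@b#v" "b \<in> \<Sigma>1" "set v \<subseteq> \<Sigma>1" "prec \<alpha>1 c b"
        using Cons.prems(4) unfolding inv2_def by blast
      then show ?thesis unfolding badd_def using c2
        by (intro exI[of _ \<alpha>1] exI[of _ b] exI[of _ v] exI[of _ c] exI[of _ w]) auto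
    next
      case nF: False
      then have n: "\<not> ok (\<alpha>@[c]) w (F1 \<union> {a\<in>\<Sigma>1. prec \<alpha> a c}) {}" using Cons.prems False c2 by simp
      have i1: "inv1 (\<alpha>@[c]) (F1 \<union> {a\<in>\<Sigma>1. prec \<alpha> a c})"
        unfolding inv1_def
      proof
        fix a assume "a \<in> F1 \<union> {a\<in>\<Sigma>1. prec \<alpha> a c}"
        then show "a \<in> \<Sigma>1 \<and> (\<exists>\<alpha>1 b v. \<alpha>@[c] = \<alpha>1@b#v \<and> b \<in> \<Sigma>2 \<and> set v \<subseteq> \<Sigma>2 \<and> prec \<alpha>1 a b)"
        proof
          assume "a \<in> F1"
          then obtain \<alpha>1 b v where "a \<in> \<Sigma>1" "\<alpha> = \<alpha>1@b#v" "b \<in> \<Sigma>2" "set v \<subseteq> \<Sigma>2" "prec \<alpha>1 a b"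
            using Cons.prems(3) unfolding inv1_def by blast
          then show ?thesis using c2 by (intro conjI exI[of _ \<alpha>1] exI[of _ b] exI[of _ "v@[c]"]) auto
        next
          assume "a \<in> {a\<in>\<Sigma>1. prec \<alpha> a c}"
          then show ?thesis using c2 by (intro conjI exI[of _ \<alpha>] exI[of _ c] exI[of _ "[]"]) auto
        qed
      qed
      have "inv2 (\<alpha>@[c]) {}" by (simp add: inv2_def)
      then have "badd ((\<alpha>@[c])@w)" using Cons.IH[OF n] Cons.prems(2) i1 by simp
      then show ?thesis by simp
    qed
  qed
qed

lemma ok_iff: "w \<in> lists (\<Sigma>1 \<union> \<Sigma>2) \<Longrightarrow> ok [] w {} {} \<longleftrightarrow> \<not> badd w"
  using ok_nobad bad_of_notok[of "[]" w "{}" "{}"] by (auto simp: inv1_def inv2_def)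

end


context twoalph begin

lemma swap_pres: "swap_step \<Sigma>1 \<Sigma>2 x y \<Longrightarrow> length x = length y \<and>
   filter (\<lambda>c. c \<in> \<Sigma>1) x = filter (\<lambda>c. c \<in> \<Sigma>1) y \<and> filter (\<lambda>c. c \<in> \<Sigma>2) x = filter (\<lambda>c. c \<in> \<Sigma>2) y"
  unfolding swap_step_def indep_def using disj by auto

lemma equiv_pres: "indep_equiv \<Sigma>1 \<Sigma>2 x y \<Longrightarrow> length x = length y \<and>
   filter (\<lambda>c. c \<in> \<Sigma>1) x = filter (\<lambda>c. c \<in> \<Sigma>1) y \<and> filter (\<lambda>c. c \<in> \<Sigma>2) x = filter (\<lambda>c. c \<in> \<Sigma>2) y"
  unfolding indep_equiv_def
  by (induction rule: rtranclp_induct) (auto dest: swap_pres)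

lemma move: "\<forall>c\<in>set x. indep \<Sigma>1 \<Sigma>2 a c \<Longrightarrow> (swap_step \<Sigma>1 \<Sigma>2)\<^sup>*\<^sup>* (p@a#x@q) (p@x@a#q)"
proof (induction x arbitrary: p)
  case Nil then show ?case by simp
next
  case (Cons c x)
  have "swap_step \<Sigma>1 \<Sigma>2 (p@a#(c#x)@q) ((p@[c])@a#x@q)"
    unfolding swap_step_def using Cons.prems by (intro exI[of _ p] exI[of _ a] exI[of _ c] exI[of _ "x@q"]) auto
  moreover have "(swap_step \<Sigma>1 \<Sigma>2)\<^sup>*\<^sup>* ((p@[c])@a#x@q) ((p@[c])@x@a#q)" using Cons.IH[of "p@[c]"] Cons.prems by simp
  ultimately show ?case by simp
qed

lemma red_iff:
  assumes w: "w \<in> shuffle \<Sigma>1 \<Sigma>2 P1 P2"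
  shows "w \<in> red \<Sigma>1 \<Sigma>2 prec (shuffle \<Sigma>1 \<Sigma>2 P1 P2) \<longleftrightarrow> \<not> badd w"
proof
  assume r: "w \<in> red \<Sigma>1 \<Sigma>2 prec (shuffle \<Sigma>1 \<Sigma>2 P1 P2)"
  show "\<not> badd w"
  proof
    assume "badd w"
    then obtain \<alpha> b v a y where wd: "w = \<alpha>@b#v@a#y" and
      c: "(b \<in> \<Sigma>2 \<and> set v \<subseteq> \<Sigma>2 \<and> a \<in> \<Sigma>1) \<or> (b \<in> \<Sigma>1 \<and> set v \<subseteq> \<Sigma>1 \<and> a \<in> \<Sigma>2)" and p: "prec \<alpha> a b"
      unfolding badd_def by blast
    let ?u = "\<alpha>@a#(b#v)@y"
    have wl: "w \<in> lists (\<Sigma>1 \<union> \<Sigma>2)" and f1: "filter (\<lambda>x. x \<in> \<Sigma>1) w \<in> P1" and f2: "filter (\<lambda>x. x \<in> \<Sigma>2) w \<in> P2"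
      using w unfolding shuffle_def by auto
    have ind: "\<forall>c\<in>set (b#v). indep \<Sigma>1 \<Sigma>2 a c" using c unfolding indep_def by auto
    have nv: "filter (\<lambda>x. x \<in> \<Sigma>1) (b#v) = [] \<and> a \<notin> \<Sigma>2 \<or> filter (\<lambda>x. x \<in> \<Sigma>2) (b#v) = [] \<and> a \<notin> \<Sigma>1"
      using c disj by (auto simp: filter_empty_conv)
    have fe1: "filter (\<lambda>x. x \<in> \<Sigma>1) ?u = filter (\<lambda>x. x \<in> \<Sigma>1) w"
      and fe2: "filter (\<lambda>x. x \<in> \<Sigma>2) ?u = filter (\<lambda>x. x \<in> \<Sigma>2) w"
      using nv c unfolding wd by auto
    have "?u \<in> shuffle \<Sigma>1 \<Sigma>2 P1 P2" unfolding shuffle_def using wl f1 f2 fe1 fe2 unfolding wd by auto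
    moreover have "indep_equiv \<Sigma>1 \<Sigma>2 ?u w" unfolding indep_equiv_def wd using move[OF ind, of \<alpha> y] by simp
    moreover have "word_le prec ?u w" unfolding word_le_def wd using p
      by (intro disjI2 exI[of _ \<alpha>] exI[of _ a] exI[of _ b] exI[of _ "(b#v)@y"] exI[of _ "v@a#y"]) simp
    moreover have "?u \<noteq> w" using c disj unfolding wd by auto
    ultimately show False using r unfolding red_def by blast
  qed
next
  assume nb: "\<not> badd w"
  have wl: "w \<in> lists (\<Sigma>1 \<union> \<Sigma>2)" using w unfolding shuffle_def by auto
  show "w \<in> red \<Sigma>1 \<Sigma>2 prec (shuffle \<Sigma>1 \<Sigma>2 P1 P2)"
    unfolding red_def
  proof (intro CollectI conjI ballI impI w)
    fix u assume u: "u \<in> shuffle \<Sigma>1 \<Sigma>2 P1 P2" and h: "indep_equiv \<Sigma>1 \<Sigma>2 u w \<and> word_le prec u w"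
    have ul: "u \<in> lists (\<Sigma>1 \<union> \<Sigma>2)" using u unfolding shuffle_def by auto
    have eq: "length u = length w" "filter (\<lambda>c. c \<in> \<Sigma>1) u = filter (\<lambda>c. c \<in> \<Sigma>1) w"
       "filter (\<lambda>c. c \<in> \<Sigma>2) u = filter (\<lambda>c. c \<in> \<Sigma>2) w" using equiv_pres h by auto
    show "u = w"
    proof (rule ccontr)
      assume ne: "u \<noteq> w"
      have "\<not> prefix u w" using ne eq(1) by (auto simp: prefix_def)
      then obtain \<alpha> a b \<beta> \<gamma> where ud: "u = \<alpha>@a#\<beta>" and wd: "w = \<alpha>@b#\<gamma>" and p: "prec \<alpha> a b"
        using h unfolding word_le_def by blast
      have al: "\<alpha> \<in> lists (\<Sigma>1 \<union> \<Sigma>2)" and aS: "a \<in> \<Sigma>1 \<union> \<Sigma>2" and bS: "b \<in> \<Sigma>1 \<union> \<Sigma>2"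
        and gl: "\<gamma> \<in> lists (\<Sigma>1 \<union> \<Sigma>2)"
        using ul wl ud wd by auto
      have "\<not> prec \<alpha> a a" using co al aS unfolding contextual_order_def strict_total_on_def by blast
      then have ab: "a \<noteq> b" using p by auto
      show False
      proof (cases "a \<in> \<Sigma>1")
        case True
        have "a # filter (\<lambda>c. c \<in> \<Sigma>1) \<beta> = filter (\<lambda>c. c \<in> \<Sigma>1) (b#\<gamma>)"
          using eq(2) True unfolding ud wd by simp
        moreover have "b \<notin> \<Sigma>1"
        proof
          assume "b \<in> \<Sigma>1" then show False using calculation ab by simp
        qed
        ultimately have "filter (\<lambda>c. c \<in> \<Sigma>1) \<gamma> = a # filter (\<lambda>c. c \<in> \<Sigma>1) \<beta>" by simp
        then obtain us vs where g: "\<gamma> = us @ a # vs" "\<forall>x\<in>set us. x \<notin> \<Sigma>1"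
          by (auto dest: filter_eq_ConsD)
        have "set us \<subseteq> \<Sigma>2" using g gl by auto
        then have "badd w" unfolding badd_def wd using g True \<open>b \<notin> \<Sigma>1\<close> bS p
          by (intro exI[of _ \<alpha>] exI[of _ b] exI[of _ us] exI[of _ a] exI[of _ vs]) auto
        then show False using nb by simp
      next
        case False
        then have a2: "a \<in> \<Sigma>2" using aS by auto
        have "a # filter (\<lambda>c. c \<in> \<Sigma>2) \<beta> = filter (\<lambda>c. c \<in> \<Sigma>2) (b#\<gamma>)"
          using eq(3) a2 unfolding ud wd by simp
        moreover have "b \<notin> \<Sigma>2"
        proof
          assume "b \<in> \<Sigma>2" then show False using calculation ab by simp
        qed
        ultimately have "filter (\<lambda>c. c \<in> \<Sigma>2) \<gamma> = a # filter (\<lambda>c. c \<in> \<Sigma>2) \<beta>" by simp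
        then obtain us vs where g: "\<gamma> = us @ a # vs" "\<forall>x\<in>set us. x \<notin> \<Sigma>2"
          by (auto dest: filter_eq_ConsD)
        have "set us \<subseteq> \<Sigma>1" using g gl by auto
        then have "badd w" unfolding badd_def wd using g a2 \<open>b \<notin> \<Sigma>2\<close> bS p
          by (intro exI[of _ \<alpha>] exI[of _ b] exI[of _ us] exI[of _ a] exI[of _ vs]) auto
        then show False using nb by simp
      qed
    qed
  qed
qed

end


locale mach = twoalph \<Sigma>1 \<Sigma>2 prec for \<Sigma>1 \<Sigma>2 :: "'a set" and prec +
  fixes \<kappa> :: "'a \<Rightarrow> letter_kind" and A1 A2 :: "(nat,nat,'a) vpa" and D :: "(nat,nat,'a) dvpa"
    and ord :: "nat \<Rightarrow> 'a \<Rightarrow> 'a \<Rightarrow> bool"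
  assumes fin1: "finite \<Sigma>1" and fin2: "finite \<Sigma>2"
    and wf1: "vpa_wf \<Sigma>1 \<kappa> A1" and wf2: "vpa_wf \<Sigma>2 \<kappa> A2" and wfD: "dvpa_wf (\<Sigma>1 \<union> \<Sigma>2) \<kappa> D"
    and ordp: "\<forall>w\<in>lists (\<Sigma>1 \<union> \<Sigma>2). prec w = ord (dvpa_state D \<kappa> w)"
begin

definition upd :: "nat \<Rightarrow> 'a \<Rightarrow> 'a set \<Rightarrow> 'a set \<Rightarrow> 'a set \<times> 'a set" where
  "upd qd a F1 F2 = (if a \<in> \<Sigma>1 then ({}, F2 \<union> {b\<in>\<Sigma>2. ord qd b a}) else (F1 \<union> {b\<in>\<Sigma>1. ord qd b a}, {}))"

definition okl :: "'a \<Rightarrow> 'a set \<Rightarrow> 'a set \<Rightarrow> bool" where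
  "okl a F1 F2 = (if a \<in> \<Sigma>1 then a \<notin> F1 else a \<notin> F2)"

definition MS :: "(nat \<times> nat \<times> nat \<times> 'a set \<times> 'a set) set" where
  "MS = states A1 \<times> states A2 \<times> dstates D \<times> Pow \<Sigma>1 \<times> Pow \<Sigma>2"

definition MG :: "(bool \<times> nat \<times> nat) set" where
  "MG = UNIV \<times> (stack_syms A1 \<union> stack_syms A2) \<times> dstack_syms D"

fun mcall :: "nat \<times> nat \<times> nat \<times> 'a set \<times> 'a set \<Rightarrow> 'a \<Rightarrow> nat \<times> nat \<times> nat \<times> 'a set \<times> 'a set \<Rightarrow> bool \<times> nat \<times> nat \<Rightarrow> bool" where
  "mcall (q1,q2,qd,F1,F2) a (q1',q2',qd',F1',F2') (t,g,gd) \<longleftrightarrow>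
     \<kappa> a = Call \<and> a \<in> \<Sigma>1 \<union> \<Sigma>2 \<and> (q1,q2,qd,F1,F2) \<in> MS \<and> okl a F1 F2 \<and> (F1',F2') = upd qd a F1 F2
     \<and> (qd',gd) = dcall D qd a \<and> t = (a \<in> \<Sigma>1)
     \<and> (if a \<in> \<Sigma>1 then (q1,a,q1',g) \<in> call_tr A1 \<and> q2' = q2 else q1' = q1 \<and> (q2,a,q2',g) \<in> call_tr A2)"

fun mret :: "nat \<times> nat \<times> nat \<times> 'a set \<times> 'a set \<Rightarrow> 'a \<Rightarrow> nat \<times> nat \<times> nat \<times> 'a set \<times> 'a set \<Rightarrow> bool \<times> nat \<times> nat \<Rightarrow> bool" where
  "mret (q1,q2,qd,F1,F2) a (q1',q2',qd',F1',F2') (t,g,gd) \<longleftrightarrow>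
     \<kappa> a = Ret \<and> a \<in> \<Sigma>1 \<union> \<Sigma>2 \<and> (q1,q2,qd,F1,F2) \<in> MS \<and> (t,g,gd) \<in> MG \<and> okl a F1 F2 \<and> (F1',F2') = upd qd a F1 F2
     \<and> qd' = dret D qd a (Some gd) \<and> t = (a \<in> \<Sigma>1)
     \<and> (if a \<in> \<Sigma>1 then (q1,a,Some g,q1') \<in> ret_tr A1 \<and> q2' = q2 else q1' = q1 \<and> (q2,a,Some g,q2') \<in> ret_tr A2)"

fun mint :: "nat \<times> nat \<times> nat \<times> 'a set \<times> 'a set \<Rightarrow> 'a \<Rightarrow> nat \<times> nat \<times> nat \<times> 'a set \<times> 'a set \<Rightarrow> bool" where
  "mint (q1,q2,qd,F1,F2) a (q1',q2',qd',F1',F2') \<longleftrightarrow>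
     \<kappa> a = Intl \<and> a \<in> \<Sigma>1 \<union> \<Sigma>2 \<and> (q1,q2,qd,F1,F2) \<in> MS \<and> okl a F1 F2 \<and> (F1',F2') = upd qd a F1 F2
     \<and> qd' = dint D qd a
     \<and> (if a \<in> \<Sigma>1 then (q1,a,q1') \<in> int_tr A1 \<and> q2' = q2 else q1' = q1 \<and> (q2,a,q2') \<in> int_tr A2)"

definition M :: "(nat \<times> nat \<times> nat \<times> 'a set \<times> 'a set, bool \<times> nat \<times> nat, 'a) vpa" where
  "M = \<lparr> states = MS, stack_syms = MG,
     initial = initial A1 \<times> initial A2 \<times> {dinit D} \<times> {{}} \<times> {{}},
     final = final A1 \<times> final A2 \<times> dstates D \<times> Pow \<Sigma>1 \<times> Pow \<Sigma>2,
     call_tr = {(x,a,y,g). mcall x a y g},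
     ret_tr = {(x,a,og,y). \<exists>g. og = Some g \<and> mret x a y g},
     int_tr = {(x,a,y). mint x a y} \<rparr>"

definition st1 :: "(bool \<times> nat \<times> nat) list \<Rightarrow> nat list" where
  "st1 S = map (fst \<circ> snd) (filter fst S)"
definition st2 :: "(bool \<times> nat \<times> nat) list \<Rightarrow> nat list" where
  "st2 S = map (fst \<circ> snd) (filter (Not \<circ> fst) S)"

lemma st_simps[simp]: "st1 [] = []" "st2 [] = []"
  "st1 ((True,g,d)#S) = g # st1 S" "st1 ((False,g,d)#S) = st1 S"
  "st2 ((True,g,d)#S) = st2 S" "st2 ((False,g,d)#S) = g # st2 S"
  by (auto simp: st1_def st2_def)

lemma M_simps: "call_tr M = {(x,a,y,g). mcall x a y g}" "ret_tr M = {(x,a,og,y). \<exists>g. og = Some g \<and> mret x a y g}"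
  "int_tr M = {(x,a,y). mint x a y}" "states M = MS" "stack_syms M = MG"
  "initial M = initial A1 \<times> initial A2 \<times> {dinit D} \<times> {{}} \<times> {{}}"
  "final M = final A1 \<times> final A2 \<times> dstates D \<times> Pow \<Sigma>1 \<times> Pow \<Sigma>2"
  by (simp_all add: M_def)

lemma prec_ord: "\<alpha> \<in> lists (\<Sigma>1 \<union> \<Sigma>2) \<Longrightarrow> dvpa_run D \<kappa> (dinit D, []) \<alpha> = (qd, s) \<Longrightarrow> prec \<alpha> = ord qd"
  using ordp by (simp add: dvpa_state_def)

lemma ok_step: "a \<in> \<Sigma>1 \<union> \<Sigma>2 \<Longrightarrow> prec \<alpha> = ord qd \<Longrightarrow> (G1,G2) = upd qd a F1 F2 \<Longrightarrow>
   ok \<alpha> (a#w) F1 F2 \<longleftrightarrow> okl a F1 F2 \<and> ok (\<alpha>@[a]) w G1 G2"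
  using disj by (auto simp: upd_def okl_def)

end


context mach begin

abbreviation "f1 w \<equiv> filter (\<lambda>x. x \<in> \<Sigma>1) w"
abbreviation "f2 w \<equiv> filter (\<lambda>x. x \<in> \<Sigma>2) w"

lemma fwd:
  "vpa_steps M \<kappa> c w c' \<Longrightarrow> c = ((q1,q2,qd,F1,F2), S) \<Longrightarrow> c' = ((q1',q2',qd',F1',F2'), S') \<Longrightarrow>
   \<alpha> \<in> lists (\<Sigma>1 \<union> \<Sigma>2) \<Longrightarrow> dvpa_run D \<kappa> (dinit D, []) \<alpha> = (qd, map (snd \<circ> snd) S) \<Longrightarrow>
   vpa_steps A1 \<kappa> (q1, st1 S) (f1 w) (q1', st1 S') \<and> vpa_steps A2 \<kappa> (q2, st2 S) (f2 w) (q2', st2 S')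
   \<and> ok \<alpha> w F1 F2 \<and> w \<in> lists (\<Sigma>1 \<union> \<Sigma>2)"
proof (induction arbitrary: q1 q2 qd F1 F2 S \<alpha> rule: vpa_steps.induct)
  case (st_nil c)
  then show ?case by (auto intro: vpa_steps.intros)
next
  case (st_call a q q' g s w c)
  obtain p1 p2 pd G1 G2 where q': "q' = (p1,p2,pd,G1,G2)" by (cases q')
  obtain t h d where g: "g = (t,h,d)" by (cases g)
  have qq: "q = (q1,q2,qd,F1,F2)" using st_call.prems by simp
  have tr0: "mcall q a q' g" using st_call(2) by (simp add: M_simps)
  have tr: "mcall (q1,q2,qd,F1,F2) a (p1,p2,pd,G1,G2) (t,h,d)" using tr0 unfolding qq q' g .
  then have aS: "a \<in> \<Sigma>1 \<union> \<Sigma>2" and dc: "(pd,d) = dcall D qd a" by auto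
  have run: "dvpa_run D \<kappa> (dinit D, []) (\<alpha>@[a]) = (pd, map (snd \<circ> snd) (g#S))"
    using st_call.prems st_call(1) dc g by (simp add: dvpa_run_append) (metis fst_conv snd_conv)
  have IH: "vpa_steps A1 \<kappa> (p1, st1 (g#S)) (f1 w) (q1', st1 S') \<and> vpa_steps A2 \<kappa> (p2, st2 (g#S)) (f2 w) (q2', st2 S')
   \<and> ok (\<alpha>@[a]) w G1 G2 \<and> w \<in> lists (\<Sigma>1 \<union> \<Sigma>2)"
    using st_call.IH[OF _ st_call.prems(2) _ run] st_call.prems q' aS by auto
  have pr: "prec \<alpha> = ord qd" using prec_ord st_call.prems by blast
  have ok: "ok \<alpha> (a#w) F1 F2" using ok_step[OF aS pr, of G1 G2 F1 F2 w] tr IH by auto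
  show ?case
  proof (cases "a \<in> \<Sigma>1")
    case True
    then have "a \<notin> \<Sigma>2" using disj by auto
    then show ?thesis using True tr IH ok aS g st_call(1) by (auto intro: vpa_steps.intros)
  next
    case False
    then show ?thesis using tr IH ok aS g st_call(1) by (auto intro: vpa_steps.intros)
  qed
next
  case (st_ret a q g q' s w c)
  obtain p1 p2 pd G1 G2 where q': "q' = (p1,p2,pd,G1,G2)" by (cases q')
  obtain t h d where g: "g = (t,h,d)" by (cases g)
  have qq: "q = (q1,q2,qd,F1,F2)" using st_ret.prems by simp
  have tr0: "mret q a q' g" using st_ret(2) by (auto simp: M_simps)
  have tr: "mret (q1,q2,qd,F1,F2) a (p1,p2,pd,G1,G2) (t,h,d)" using tr0 unfolding qq q' g .
  then have aS: "a \<in> \<Sigma>1 \<union> \<Sigma>2" and dc: "pd = dret D qd a (Some d)" by auto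
  have S: "S = g # s" using st_ret.prems by simp
  have run: "dvpa_run D \<kappa> (dinit D, []) (\<alpha>@[a]) = (pd, map (snd \<circ> snd) s)"
    using st_ret.prems st_ret(1) dc g S by (simp add: dvpa_run_append)
  have IH: "vpa_steps A1 \<kappa> (p1, st1 s) (f1 w) (q1', st1 S') \<and> vpa_steps A2 \<kappa> (p2, st2 s) (f2 w) (q2', st2 S')
   \<and> ok (\<alpha>@[a]) w G1 G2 \<and> w \<in> lists (\<Sigma>1 \<union> \<Sigma>2)"
    using st_ret.IH[OF _ st_ret.prems(2) _ run] st_ret.prems q' aS by auto
  have pr: "prec \<alpha> = ord qd" using prec_ord st_ret.prems by blast
  have ok: "ok \<alpha> (a#w) F1 F2" using ok_step[OF aS pr, of G1 G2 F1 F2 w] tr IH by auto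
  show ?case
  proof (cases "a \<in> \<Sigma>1")
    case True
    then have "a \<notin> \<Sigma>2" using disj by auto
    then show ?thesis using True tr IH ok aS g S st_ret(1) by (auto intro: vpa_steps.intros)
  next
    case False
    then show ?thesis using tr IH ok aS g S st_ret(1) by (auto intro: vpa_steps.intros)
  qed
next
  case (st_ret_bot a q q' w c)
  then show ?case by (simp add: M_simps)
next
  case (st_int a q q' s w c)
  obtain p1 p2 pd G1 G2 where q': "q' = (p1,p2,pd,G1,G2)" by (cases q')
  have qq: "q = (q1,q2,qd,F1,F2)" using st_int.prems by simp
  have tr0: "mint q a q'" using st_int(2) by (simp add: M_simps)
  have tr: "mint (q1,q2,qd,F1,F2) a (p1,p2,pd,G1,G2)" using tr0 unfolding qq q' .
  then have aS: "a \<in> \<Sigma>1 \<union> \<Sigma>2" and dc: "pd = dint D qd a" by auto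
  have run: "dvpa_run D \<kappa> (dinit D, []) (\<alpha>@[a]) = (pd, map (snd \<circ> snd) S)"
    using st_int.prems st_int(1) dc by (simp add: dvpa_run_append)
  have IH: "vpa_steps A1 \<kappa> (p1, st1 S) (f1 w) (q1', st1 S') \<and> vpa_steps A2 \<kappa> (p2, st2 S) (f2 w) (q2', st2 S')
   \<and> ok (\<alpha>@[a]) w G1 G2 \<and> w \<in> lists (\<Sigma>1 \<union> \<Sigma>2)"
    using st_int.IH[OF _ st_int.prems(2) _ run] st_int.prems q' aS by auto
  have pr: "prec \<alpha> = ord qd" using prec_ord st_int.prems by blast
  have ok: "ok \<alpha> (a#w) F1 F2" using ok_step[OF aS pr, of G1 G2 F1 F2 w] tr IH by auto
  show ?case
  proof (cases "a \<in> \<Sigma>1")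
    case True
    then have "a \<notin> \<Sigma>2" using disj by auto
    then show ?thesis using True tr IH ok aS st_int(1) st_int.prems by (auto intro: vpa_steps.intros)
  next
    case False
    then show ?thesis using tr IH ok aS st_int(1) st_int.prems by (auto intro: vpa_steps.intros)
  qed
qed

end


context mach begin

lemma DH: "\<forall>q \<in> dstates D. \<forall>a \<in> \<Sigma>1 \<union> \<Sigma>2.
          (\<kappa> a = Call \<longrightarrow> fst (dcall D q a) \<in> dstates D \<and> snd (dcall D q a) \<in> dstack_syms D)
        \<and> (\<kappa> a = Ret \<longrightarrow> (\<forall>g \<in> insert None (Some ` dstack_syms D). dret D q a g \<in> dstates D))
        \<and> (\<kappa> a = Intl \<longrightarrow> dint D q a \<in> dstates D)"
  using wfD unfolding dvpa_wf_def by (elim conjE) assumption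

lemma D_call: "qd \<in> dstates D \<Longrightarrow> a \<in> \<Sigma>1 \<union> \<Sigma>2 \<Longrightarrow> \<kappa> a = Call \<Longrightarrow>
    fst (dcall D qd a) \<in> dstates D \<and> snd (dcall D qd a) \<in> dstack_syms D"
  using bspec[OF bspec[OF DH], of qd a] by simp
lemma D_ret: "qd \<in> dstates D \<Longrightarrow> a \<in> \<Sigma>1 \<union> \<Sigma>2 \<Longrightarrow> \<kappa> a = Ret \<Longrightarrow> d \<in> dstack_syms D \<Longrightarrow>
    dret D qd a (Some d) \<in> dstates D"
  using bspec[OF bspec[OF DH], of qd a] by simp
lemma D_int: "qd \<in> dstates D \<Longrightarrow> a \<in> \<Sigma>1 \<union> \<Sigma>2 \<Longrightarrow> \<kappa> a = Intl \<Longrightarrow> dint D qd a \<in> dstates D"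
  using bspec[OF bspec[OF DH], of qd a] by simp

lemma upd_sub: "F1 \<subseteq> \<Sigma>1 \<Longrightarrow> F2 \<subseteq> \<Sigma>2 \<Longrightarrow> (G1,G2) = upd qd a F1 F2 \<Longrightarrow> G1 \<subseteq> \<Sigma>1 \<and> G2 \<subseteq> \<Sigma>2"
  by (auto simp: upd_def split: if_splits)

lemma wfp1: "vpa_wf S \<kappa> A \<Longrightarrow> \<forall>(q, a, q', g) \<in> call_tr A. q \<in> states A \<and> a \<in> S \<and> \<kappa> a = Call \<and> q' \<in> states A \<and> g \<in> stack_syms A"
  unfolding vpa_wf_def by (elim conjE) assumption
lemma wfp2: "vpa_wf S \<kappa> A \<Longrightarrow> \<forall>(q, a, g, q') \<in> ret_tr A. q \<in> states A \<and> a \<in> S \<and> \<kappa> a = Ret \<and> q' \<in> states A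
                                    \<and> g \<in> insert None (Some ` stack_syms A)"
  unfolding vpa_wf_def by (elim conjE) assumption
lemma wfp3: "vpa_wf S \<kappa> A \<Longrightarrow> \<forall>(q, a, q') \<in> int_tr A. q \<in> states A \<and> a \<in> S \<and> \<kappa> a = Intl \<and> q' \<in> states A"
  unfolding vpa_wf_def by (elim conjE) assumption
lemma wfp4: "vpa_wf S \<kappa> A \<Longrightarrow> initial A \<subseteq> states A"
  unfolding vpa_wf_def by (elim conjE) assumption
lemma wfp5: "vpa_wf S \<kappa> A \<Longrightarrow> final A \<subseteq> states A"
  unfolding vpa_wf_def by (elim conjE) assumption

lemma A1_call: "(q,a,q',g) \<in> call_tr A1 \<Longrightarrow> q' \<in> states A1 \<and> g \<in> stack_syms A1"
  using wfp1[OF wf1] by fast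
lemma A2_call: "(q,a,q',g) \<in> call_tr A2 \<Longrightarrow> q' \<in> states A2 \<and> g \<in> stack_syms A2"
  using wfp1[OF wf2] by fast
lemma A1_ret: "(q,a,g,q') \<in> ret_tr A1 \<Longrightarrow> q' \<in> states A1"
  using wfp2[OF wf1] by fast
lemma A2_ret: "(q,a,g,q') \<in> ret_tr A2 \<Longrightarrow> q' \<in> states A2"
  using wfp2[OF wf2] by fast
lemma A1_int: "(q,a,q') \<in> int_tr A1 \<Longrightarrow> q' \<in> states A1"
  using wfp3[OF wf1] by fast
lemma A2_int: "(q,a,q') \<in> int_tr A2 \<Longrightarrow> q' \<in> states A2"
  using wfp3[OF wf2] by fast

lemma bwd:
  assumes AL: "\<forall>x a y. w = x @ a # y \<and> \<kappa> a = Ret \<longrightarrow> pend \<kappa> x \<noteq> [] \<and> (hd (pend \<kappa> x) \<in> \<Sigma>1 \<longleftrightarrow> a \<in> \<Sigma>1)"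
    and wl: "w \<in> lists (\<Sigma>1 \<union> \<Sigma>2)"
  shows "x @ y = w \<Longrightarrow> vpa_steps A1 \<kappa> (q1,s1) (f1 y) (e1,t1) \<Longrightarrow> vpa_steps A2 \<kappa> (q2,s2) (f2 y) (e2,t2) \<Longrightarrow>
    dvpa_run D \<kappa> (dinit D, []) x = (qd, map (snd \<circ> snd) S) \<Longrightarrow> st1 S = s1 \<Longrightarrow> st2 S = s2 \<Longrightarrow>
    map fst S = map (\<lambda>c. c \<in> \<Sigma>1) (pend \<kappa> x) \<Longrightarrow> set S \<subseteq> MG \<Longrightarrow> (q1,q2,qd,F1,F2) \<in> MS \<Longrightarrow>
    ok x y F1 F2 \<Longrightarrow>
    \<exists>qd' F1' F2' S'. vpa_steps M \<kappa> ((q1,q2,qd,F1,F2), S) y ((e1,e2,qd',F1',F2'), S') \<and> (e1,e2,qd',F1',F2') \<in> MS"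
proof (induction y arbitrary: x q1 s1 q2 s2 qd S F1 F2)
  case Nil
  then show ?case by (auto simp: steps_Nil_iff intro: vpa_steps.intros)
next
  case (Cons a y)
  note P = Cons.prems
  have aS: "a \<in> \<Sigma>1 \<union> \<Sigma>2" and xl: "x \<in> lists (\<Sigma>1 \<union> \<Sigma>2)" using wl P(1) by auto
  have pr: "prec x = ord qd" using prec_ord[OF xl P(4)] .
  obtain G1 G2 where G: "(G1,G2) = upd qd a F1 F2" by (metis surj_pair)
  have okG: "okl a F1 F2" "ok (x@[a]) y G1 G2" using ok_step[OF aS pr G] P(10) by auto
  have ms: "q1 \<in> states A1" "q2 \<in> states A2" "qd \<in> dstates D" "F1 \<subseteq> \<Sigma>1" "F2 \<subseteq> \<Sigma>2"
    using P(9) by (auto simp: MS_def)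
  have Gs: "G1 \<subseteq> \<Sigma>1" "G2 \<subseteq> \<Sigma>2" using upd_sub[OF ms(4,5) G] by auto
  have x': "(x@[a]) @ y = w" using P(1) by simp
  show ?case
  proof (cases "\<kappa> a")
    case Call
    obtain pd d where pd: "dcall D qd a = (pd, d)" by (metis surj_pair)
    have pdv: "pd \<in> dstates D" "d \<in> dstack_syms D" using D_call[OF ms(3) aS Call] pd by auto
    have run: "dvpa_run D \<kappa> (dinit D, []) (x@[a]) = (pd, map (snd \<circ> snd) ((a \<in> \<Sigma>1, 0, d) # S))"
      using P(4) Call pd by (simp add: dvpa_run_append)
    show ?thesis
    proof (cases "a \<in> \<Sigma>1")
      case True
      then have n2: "a \<notin> \<Sigma>2" using disj by auto
      from P(2) True Call obtain q1' g where tr1: "(q1,a,q1',g) \<in> call_tr A1"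
        and r1: "vpa_steps A1 \<kappa> (q1', g#s1) (f1 y) (e1,t1)" by (auto simp: steps_Cons_iff)
      have v: "q1' \<in> states A1" "g \<in> stack_syms A1" using A1_call[OF tr1] by auto
      let ?S = "(True, g, d) # S"
      have run': "dvpa_run D \<kappa> (dinit D, []) (x@[a]) = (pd, map (snd \<circ> snd) ?S)" using run by simp
      obtain qd' F1' F2' S' where IH: "vpa_steps M \<kappa> ((q1',q2,pd,G1,G2), ?S) y ((e1,e2,qd',F1',F2'), S')"
        "(e1,e2,qd',F1',F2') \<in> MS"
      proof -
        have r2: "vpa_steps A2 \<kappa> (q2,s2) (f2 y) (e2,t2)" using P(3) n2 by simp
        have mg: "set ?S \<subseteq> MG" using P(8) v pdv by (auto simp: MG_def)
        have msn: "(q1',q2,pd,G1,G2) \<in> MS" using v ms pdv Gs by (simp add: MS_def)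
        have pe: "map fst ?S = map (\<lambda>c. c \<in> \<Sigma>1) (pend \<kappa> (x@[a]))" using P(7) Call True by simp
        have a1: "st1 ?S = g # s1" "st2 ?S = s2" using P(5,6) by simp_all
        show ?thesis using Cons.IH[OF x' r1 r2 run' a1 pe mg msn okG(2)] that by blast
      qed
      have "mcall (q1,q2,qd,F1,F2) a (q1',q2,pd,G1,G2) (True,g,d)"
        using Call aS P(9) okG G[symmetric] pd True tr1 by simp
      then have "((q1,q2,qd,F1,F2), a, (q1',q2,pd,G1,G2), (True,g,d)) \<in> call_tr M" by (simp add: M_simps del: mcall.simps)
      then show ?thesis using IH Call by (blast intro: vpa_steps.st_call)
    next
      case False
      then have a2: "a \<in> \<Sigma>2" using aS by auto
      from P(3) a2 Call obtain q2' g where tr2: "(q2,a,q2',g) \<in> call_tr A2"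
        and r2: "vpa_steps A2 \<kappa> (q2', g#s2) (f2 y) (e2,t2)" by (auto simp: steps_Cons_iff)
      have v: "q2' \<in> states A2" "g \<in> stack_syms A2" using A2_call[OF tr2] by auto
      let ?S = "(False, g, d) # S"
      have run': "dvpa_run D \<kappa> (dinit D, []) (x@[a]) = (pd, map (snd \<circ> snd) ?S)" using run by simp
      obtain qd' F1' F2' S' where IH: "vpa_steps M \<kappa> ((q1,q2',pd,G1,G2), ?S) y ((e1,e2,qd',F1',F2'), S')"
        "(e1,e2,qd',F1',F2') \<in> MS"
      proof -
        have r1: "vpa_steps A1 \<kappa> (q1,s1) (f1 y) (e1,t1)" using P(2) False by simp
        have mg: "set ?S \<subseteq> MG" using P(8) v pdv by (auto simp: MG_def)
        have msn: "(q1,q2',pd,G1,G2) \<in> MS" using v ms pdv Gs by (simp add: MS_def)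
        have pe: "map fst ?S = map (\<lambda>c. c \<in> \<Sigma>1) (pend \<kappa> (x@[a]))" using P(7) Call False by simp
        have a1: "st1 ?S = s1" "st2 ?S = g # s2" using P(5,6) by simp_all
        show ?thesis using Cons.IH[OF x' r1 r2 run' a1 pe mg msn okG(2)] that by blast
      qed
      have "mcall (q1,q2,qd,F1,F2) a (q1,q2',pd,G1,G2) (False,g,d)"
        using Call aS P(9) okG G[symmetric] pd False tr2 by simp
      then have "((q1,q2,qd,F1,F2), a, (q1,q2',pd,G1,G2), (False,g,d)) \<in> call_tr M" by (simp add: M_simps del: mcall.simps)
      then show ?thesis using IH Call by (blast intro: vpa_steps.st_call)
    qed
  next
    case Ret
    have al: "pend \<kappa> x \<noteq> [] \<and> (hd (pend \<kappa> x) \<in> \<Sigma>1 \<longleftrightarrow> a \<in> \<Sigma>1)" using AL P(1) Ret by blast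
    then obtain c rest where pc: "pend \<kappa> x = c # rest" by (cases "pend \<kappa> x") auto
    from P(7) pc obtain t g d S0 where S: "S = (t,g,d) # S0" and t: "t = (c \<in> \<Sigma>1)"
      and S0: "map fst S0 = map (\<lambda>c. c \<in> \<Sigma>1) rest" by (cases S) auto
    have tg: "t = (a \<in> \<Sigma>1)" using al pc t by simp
    have gv: "(t,g,d) \<in> MG" using P(8) S by auto
    then have dv: "d \<in> dstack_syms D" by (simp add: MG_def)
    have pdv: "dret D qd a (Some d) \<in> dstates D" using D_ret[OF ms(3) aS Ret dv] .
    have run': "dvpa_run D \<kappa> (dinit D, []) (x@[a]) = (dret D qd a (Some d), map (snd \<circ> snd) S0)"
      using P(4) Ret S by (simp add: dvpa_run_append)
    have pend': "map fst S0 = map (\<lambda>c. c \<in> \<Sigma>1) (pend \<kappa> (x@[a]))" using S0 pc Ret by simp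
    have S0v: "set S0 \<subseteq> MG" using P(8) S by auto
    show ?thesis
    proof (cases "a \<in> \<Sigma>1")
      case True
      then have n2: "a \<notin> \<Sigma>2" using disj by auto
      have s1: "s1 = g # st1 S0" using P(5) S tg True by simp
      from P(2) True Ret s1 obtain q1' where tr1: "(q1,a,Some g,q1') \<in> ret_tr A1"
        and r1: "vpa_steps A1 \<kappa> (q1', st1 S0) (f1 y) (e1,t1)" by (auto simp: steps_Cons_iff)
      have v: "q1' \<in> states A1" using A1_ret[OF tr1] .
      have s2: "st2 S0 = s2" using P(6) S tg True by simp
      obtain qd' F1' F2' S' where IH: "vpa_steps M \<kappa> ((q1',q2,dret D qd a (Some d),G1,G2), S0) y ((e1,e2,qd',F1',F2'), S')"
        "(e1,e2,qd',F1',F2') \<in> MS"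
      proof -
        have r2: "vpa_steps A2 \<kappa> (q2,s2) (f2 y) (e2,t2)" using P(3) n2 by simp
        have msn: "(q1',q2,dret D qd a (Some d),G1,G2) \<in> MS" using v ms pdv Gs by (simp add: MS_def)
        show ?thesis using Cons.IH[OF x' r1 r2 run' refl s2 pend' S0v msn okG(2)] that by blast
      qed
      have "mret (q1,q2,qd,F1,F2) a (q1',q2,dret D qd a (Some d),G1,G2) (t,g,d)"
        using Ret aS P(9) okG G[symmetric] True tr1 gv tg by simp
      then have "((q1,q2,qd,F1,F2), a, Some (t,g,d), (q1',q2,dret D qd a (Some d),G1,G2)) \<in> ret_tr M" by (simp add: M_simps del: mret.simps)
      then show ?thesis using IH Ret S by (blast intro: vpa_steps.st_ret)
    next
      case False
      then have a2: "a \<in> \<Sigma>2" using aS by auto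
      have s2: "s2 = g # st2 S0" using P(6) S tg False by simp
      from P(3) a2 Ret s2 obtain q2' where tr2: "(q2,a,Some g,q2') \<in> ret_tr A2"
        and r2: "vpa_steps A2 \<kappa> (q2', st2 S0) (f2 y) (e2,t2)" by (auto simp: steps_Cons_iff)
      have v: "q2' \<in> states A2" using A2_ret[OF tr2] .
      have s1: "st1 S0 = s1" using P(5) S tg False by simp
      obtain qd' F1' F2' S' where IH: "vpa_steps M \<kappa> ((q1,q2',dret D qd a (Some d),G1,G2), S0) y ((e1,e2,qd',F1',F2'), S')"
        "(e1,e2,qd',F1',F2') \<in> MS"
      proof -
        have r1: "vpa_steps A1 \<kappa> (q1,s1) (f1 y) (e1,t1)" using P(2) False by simp
        have msn: "(q1,q2',dret D qd a (Some d),G1,G2) \<in> MS" using v ms pdv Gs by (simp add: MS_def)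
        show ?thesis using Cons.IH[OF x' r1 r2 run' s1 refl pend' S0v msn okG(2)] that by blast
      qed
      have "mret (q1,q2,qd,F1,F2) a (q1,q2',dret D qd a (Some d),G1,G2) (t,g,d)"
        using Ret aS P(9) okG G[symmetric] False tr2 gv tg by simp
      then have "((q1,q2,qd,F1,F2), a, Some (t,g,d), (q1,q2',dret D qd a (Some d),G1,G2)) \<in> ret_tr M" by (simp add: M_simps del: mret.simps)
      then show ?thesis using IH Ret S by (blast intro: vpa_steps.st_ret)
    qed
  next
    case Intl
    have pdv: "dint D qd a \<in> dstates D" using D_int[OF ms(3) aS Intl] .
    have run': "dvpa_run D \<kappa> (dinit D, []) (x@[a]) = (dint D qd a, map (snd \<circ> snd) S)"
      using P(4) Intl by (simp add: dvpa_run_append)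
    have pend': "map fst S = map (\<lambda>c. c \<in> \<Sigma>1) (pend \<kappa> (x@[a]))" using P(7) Intl by simp
    show ?thesis
    proof (cases "a \<in> \<Sigma>1")
      case True
      then have n2: "a \<notin> \<Sigma>2" using disj by auto
      from P(2) True Intl obtain q1' where tr1: "(q1,a,q1') \<in> int_tr A1"
        and r1: "vpa_steps A1 \<kappa> (q1', s1) (f1 y) (e1,t1)" by (auto simp: steps_Cons_iff)
      have v: "q1' \<in> states A1" using A1_int[OF tr1] .
      obtain qd' F1' F2' S' where IH: "vpa_steps M \<kappa> ((q1',q2,dint D qd a,G1,G2), S) y ((e1,e2,qd',F1',F2'), S')"
        "(e1,e2,qd',F1',F2') \<in> MS"
      proof -
        have r2: "vpa_steps A2 \<kappa> (q2,s2) (f2 y) (e2,t2)" using P(3) n2 by simp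
        have msn: "(q1',q2,dint D qd a,G1,G2) \<in> MS" using v ms pdv Gs by (simp add: MS_def)
        show ?thesis using Cons.IH[OF x' r1 r2 run' P(5) P(6) pend' P(8) msn okG(2)] that by blast
      qed
      have "mint (q1,q2,qd,F1,F2) a (q1',q2,dint D qd a,G1,G2)"
        using Intl aS P(9) okG G[symmetric] True tr1 by simp
      then have "((q1,q2,qd,F1,F2), a, (q1',q2,dint D qd a,G1,G2)) \<in> int_tr M" by (simp add: M_simps del: mint.simps)
      then show ?thesis using IH Intl by (blast intro: vpa_steps.st_int)
    next
      case False
      then have a2: "a \<in> \<Sigma>2" using aS by auto
      from P(3) a2 Intl obtain q2' where tr2: "(q2,a,q2') \<in> int_tr A2"
        and r2: "vpa_steps A2 \<kappa> (q2', s2) (f2 y) (e2,t2)" by (auto simp: steps_Cons_iff)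
      have v: "q2' \<in> states A2" using A2_int[OF tr2] .
      obtain qd' F1' F2' S' where IH: "vpa_steps M \<kappa> ((q1,q2',dint D qd a,G1,G2), S) y ((e1,e2,qd',F1',F2'), S')"
        "(e1,e2,qd',F1',F2') \<in> MS"
      proof -
        have r1: "vpa_steps A1 \<kappa> (q1,s1) (f1 y) (e1,t1)" using P(2) False by simp
        have msn: "(q1,q2',dint D qd a,G1,G2) \<in> MS" using v ms pdv Gs by (simp add: MS_def)
        show ?thesis using Cons.IH[OF x' r1 r2 run' P(5) P(6) pend' P(8) msn okG(2)] that by blast
      qed
      have "mint (q1,q2,qd,F1,F2) a (q1,q2',dint D qd a,G1,G2)"
        using Intl aS P(9) okG G[symmetric] False tr2 by simp
      then have "((q1,q2,qd,F1,F2), a, (q1,q2',dint D qd a,G1,G2)) \<in> int_tr M" by (simp add: M_simps del: mint.simps)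
      then show ?thesis using IH Intl by (blast intro: vpa_steps.st_int)
    qed
  qed
qed

end


context mach begin

lemma mcall_ok: "mcall x a y g \<Longrightarrow> x \<in> MS \<and> a \<in> \<Sigma>1 \<union> \<Sigma>2 \<and> \<kappa> a = Call \<and> y \<in> MS \<and> g \<in> MG"
proof -
  assume h: "mcall x a y g"
  obtain q1 q2 qd F1 F2 where x: "x = (q1,q2,qd,F1,F2)" by (cases x)
  obtain p1 p2 pd G1 G2 where y: "y = (p1,p2,pd,G1,G2)" by (cases y)
  obtain t h' d where g: "g = (t,h',d)" by (cases g)
  have m: "mcall (q1,q2,qd,F1,F2) a (p1,p2,pd,G1,G2) (t,h',d)" using h unfolding x y g .
  then have b: "\<kappa> a = Call" "a \<in> \<Sigma>1 \<union> \<Sigma>2" "(q1,q2,qd,F1,F2) \<in> MS" "(G1,G2) = upd qd a F1 F2"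
    "(pd,d) = dcall D qd a" using m unfolding mcall.simps by blast+
  have ms: "q1 \<in> states A1" "q2 \<in> states A2" "qd \<in> dstates D" "F1 \<subseteq> \<Sigma>1" "F2 \<subseteq> \<Sigma>2"
    using b(3) by (auto simp: MS_def)
  have Gs: "G1 \<subseteq> \<Sigma>1" "G2 \<subseteq> \<Sigma>2" using upd_sub[OF ms(4,5) b(4)] by auto
  have dv: "pd \<in> dstates D" "d \<in> dstack_syms D" using D_call[OF ms(3) b(2) b(1)] b(5)
    by (metis fst_conv snd_conv)+
  have "p1 \<in> states A1 \<and> p2 \<in> states A2 \<and> h' \<in> stack_syms A1 \<union> stack_syms A2"
  proof (cases "a \<in> \<Sigma>1")
    case True
    then have "(q1,a,p1,h') \<in> call_tr A1" "p2 = q2" using m by simp_all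
    then show ?thesis using A1_call ms by auto
  next
    case False
    then have "(q2,a,p2,h') \<in> call_tr A2" "p1 = q1" using m by simp_all
    then show ?thesis using A2_call ms by auto
  qed
  then show ?thesis using x y g b(1,2,3,5) Gs dv by (auto simp: MS_def MG_def)
qed

lemma mret_ok: "mret x a y g \<Longrightarrow> x \<in> MS \<and> a \<in> \<Sigma>1 \<union> \<Sigma>2 \<and> \<kappa> a = Ret \<and> y \<in> MS \<and> g \<in> MG"
proof -
  assume h: "mret x a y g"
  obtain q1 q2 qd F1 F2 where x: "x = (q1,q2,qd,F1,F2)" by (cases x)
  obtain p1 p2 pd G1 G2 where y: "y = (p1,p2,pd,G1,G2)" by (cases y)
  obtain t h' d where g: "g = (t,h',d)" by (cases g)
  have m: "mret (q1,q2,qd,F1,F2) a (p1,p2,pd,G1,G2) (t,h',d)" using h unfolding x y g .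
  then have b: "\<kappa> a = Ret" "a \<in> \<Sigma>1 \<union> \<Sigma>2" "(q1,q2,qd,F1,F2) \<in> MS" "(G1,G2) = upd qd a F1 F2"
    "pd = dret D qd a (Some d)" "(t,h',d) \<in> MG" using m unfolding mret.simps by blast+
  have ms: "q1 \<in> states A1" "q2 \<in> states A2" "qd \<in> dstates D" "F1 \<subseteq> \<Sigma>1" "F2 \<subseteq> \<Sigma>2"
    using b(3) by (auto simp: MS_def)
  have Gs: "G1 \<subseteq> \<Sigma>1" "G2 \<subseteq> \<Sigma>2" using upd_sub[OF ms(4,5) b(4)] by auto
  have dv: "pd \<in> dstates D" using D_ret[OF ms(3) b(2) b(1)] b(5,6) by (simp add: MG_def)
  have "p1 \<in> states A1 \<and> p2 \<in> states A2"
  proof (cases "a \<in> \<Sigma>1")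
    case True
    then have "(q1,a,Some h',p1) \<in> ret_tr A1" "p2 = q2" using m by simp_all
    then show ?thesis using A1_ret ms by auto
  next
    case False
    then have "(q2,a,Some h',p2) \<in> ret_tr A2" "p1 = q1" using m by simp_all
    then show ?thesis using A2_ret ms by auto
  qed
  then show ?thesis using x y g b(1,2,3,5,6) Gs dv by (auto simp: MS_def)
qed

lemma mint_ok: "mint x a y \<Longrightarrow> x \<in> MS \<and> a \<in> \<Sigma>1 \<union> \<Sigma>2 \<and> \<kappa> a = Intl \<and> y \<in> MS"
proof -
  assume h: "mint x a y"
  obtain q1 q2 qd F1 F2 where x: "x = (q1,q2,qd,F1,F2)" by (cases x)
  obtain p1 p2 pd G1 G2 where y: "y = (p1,p2,pd,G1,G2)" by (cases y)
  have m: "mint (q1,q2,qd,F1,F2) a (p1,p2,pd,G1,G2)" using h unfolding x y .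
  then have b: "\<kappa> a = Intl" "a \<in> \<Sigma>1 \<union> \<Sigma>2" "(q1,q2,qd,F1,F2) \<in> MS" "(G1,G2) = upd qd a F1 F2"
    "pd = dint D qd a" using m unfolding mint.simps by blast+
  have ms: "q1 \<in> states A1" "q2 \<in> states A2" "qd \<in> dstates D" "F1 \<subseteq> \<Sigma>1" "F2 \<subseteq> \<Sigma>2"
    using b(3) by (auto simp: MS_def)
  have Gs: "G1 \<subseteq> \<Sigma>1" "G2 \<subseteq> \<Sigma>2" using upd_sub[OF ms(4,5) b(4)] by auto
  have dv: "pd \<in> dstates D" using D_int[OF ms(3) b(2) b(1)] b(5) by simp
  have "p1 \<in> states A1 \<and> p2 \<in> states A2"
  proof (cases "a \<in> \<Sigma>1")
    case True
    then have "(q1,a,p1) \<in> int_tr A1" "p2 = q2" using m by simp_all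
    then show ?thesis using A1_int ms by auto
  next
    case False
    then have "(q2,a,p2) \<in> int_tr A2" "p1 = q1" using m by simp_all
    then show ?thesis using A2_int ms by auto
  qed
  then show ?thesis using x y b(1,2,3,5) Gs dv by (auto simp: MS_def)
qed

lemma M_wf: "vpa_wf (\<Sigma>1 \<union> \<Sigma>2) \<kappa> M"
proof -
  have f1': "finite (states A1) \<and> finite (stack_syms A1)" using wf1 unfolding vpa_wf_def by (elim conjE) simp
  have f2': "finite (states A2) \<and> finite (stack_syms A2)" using wf2 unfolding vpa_wf_def by (elim conjE) simp
  have f: "finite (states A1)" "finite (states A2)" "finite (stack_syms A1)" "finite (stack_syms A2)"
    using f1' f2' by simp_all
  have fD': "finite (dstates D) \<and> finite (dstack_syms D) \<and> dinit D \<in> dstates D"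
    using wfD unfolding dvpa_wf_def by (elim conjE) simp
  have fD: "finite (dstates D)" "finite (dstack_syms D)" "dinit D \<in> dstates D" using fD' by simp_all
  have "finite MS" unfolding MS_def using f fD fin1 fin2 by simp
  moreover have "finite MG" unfolding MG_def using f fD by simp
  moreover have "initial M \<subseteq> states M" using wfp4[OF wf1] wfp4[OF wf2] fD
    by (auto simp: M_simps MS_def)
  moreover have "final M \<subseteq> states M" using wfp5[OF wf1] wfp5[OF wf2]
    by (auto simp: M_simps MS_def)
  moreover have "\<forall>(q, a, q', g) \<in> call_tr M. q \<in> states M \<and> a \<in> \<Sigma>1 \<union> \<Sigma>2 \<and> \<kappa> a = Call \<and> q' \<in> states M \<and> g \<in> stack_syms M"
    unfolding M_simps using mcall_ok by blast
  moreover have "\<forall>(q, a, g, q') \<in> ret_tr M. q \<in> states M \<and> a \<in> \<Sigma>1 \<union> \<Sigma>2 \<and> \<kappa> a = Ret \<and> q' \<in> states M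
                                    \<and> g \<in> insert None (Some ` stack_syms M)"
    unfolding M_simps using mret_ok by blast
  moreover have "\<forall>(q, a, q') \<in> int_tr M. q \<in> states M \<and> a \<in> \<Sigma>1 \<union> \<Sigma>2 \<and> \<kappa> a = Intl \<and> q' \<in> states M"
    unfolding M_simps using mint_ok by blast
  ultimately show ?thesis unfolding vpa_wf_def M_simps by blast
qed

end


context mach begin

lemma M_lang:
  assumes L1: "vpa_lang \<Sigma>1 \<kappa> A1 = P1" and L2: "vpa_lang \<Sigma>2 \<kappa> A2 = P2"
    and wm1: "\<forall>w \<in> P1. well_matched \<kappa> w" and wm2: "\<forall>w \<in> P2. well_matched \<kappa> w"
    and hyp: "red \<Sigma>1 \<Sigma>2 prec (shuffle \<Sigma>1 \<Sigma>2 P1 P2) \<subseteq> wn \<Sigma>1 \<Sigma>2 \<kappa> (shuffle \<Sigma>1 \<Sigma>2 P1 P2)"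
  shows "vpa_lang (\<Sigma>1 \<union> \<Sigma>2) \<kappa> M = red \<Sigma>1 \<Sigma>2 prec (shuffle \<Sigma>1 \<Sigma>2 P1 P2)"
proof (intro set_eqI iffI)
  fix w assume "w \<in> vpa_lang (\<Sigma>1 \<union> \<Sigma>2) \<kappa> M"
  then obtain q0 q s where w: "w \<in> lists (\<Sigma>1 \<union> \<Sigma>2)" "q0 \<in> initial M" "vpa_steps M \<kappa> (q0, []) w (q, s)" "q \<in> final M"
    unfolding vpa_lang_def by blast
  from w(2) obtain i1 i2 where q0: "q0 = (i1,i2,dinit D,{},{})" "i1 \<in> initial A1" "i2 \<in> initial A2"
    by (auto simp: M_simps)
  obtain e1 e2 qd' F1' F2' where q: "q = (e1,e2,qd',F1',F2')" by (cases q)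
  have fi: "e1 \<in> final A1" "e2 \<in> final A2" using w(4) q by (auto simp: M_simps)
  have r0: "dvpa_run D \<kappa> (dinit D, []) [] = (dinit D, map (snd \<circ> snd) [])" by simp
  have F: "vpa_steps A1 \<kappa> (i1, []) (f1 w) (e1, st1 s) \<and> vpa_steps A2 \<kappa> (i2, []) (f2 w) (e2, st2 s)
   \<and> ok [] w {} {}"
  proof -
    have w3: "vpa_steps M \<kappa> ((i1,i2,dinit D,{},{}), []) w ((e1,e2,qd',F1',F2'), s)" using w(3) q0 q by simp
    show ?thesis using fwd[OF w3 refl refl, of "[]"] r0 by simp
  qed
  have "f1 w \<in> P1" unfolding L1[symmetric] vpa_lang_def using F q0 fi by auto
  moreover have "f2 w \<in> P2" unfolding L2[symmetric] vpa_lang_def using F q0 fi by auto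
  ultimately have ws: "w \<in> shuffle \<Sigma>1 \<Sigma>2 P1 P2" unfolding shuffle_def using w(1) by auto
  have "\<not> badd w" using ok_iff[OF w(1)] F by simp
  then show "w \<in> red \<Sigma>1 \<Sigma>2 prec (shuffle \<Sigma>1 \<Sigma>2 P1 P2)" using red_iff[OF ws] by simp
next
  fix w assume wr: "w \<in> red \<Sigma>1 \<Sigma>2 prec (shuffle \<Sigma>1 \<Sigma>2 P1 P2)"
  then have ws: "w \<in> shuffle \<Sigma>1 \<Sigma>2 P1 P2" unfolding red_def by simp
  have wn': "well_nested \<Sigma>1 \<Sigma>2 \<kappa> w" using hyp wr unfolding wn_def by blast
  have wl: "w \<in> lists (\<Sigma>1 \<union> \<Sigma>2)" and p1: "f1 w \<in> P1" and p2: "f2 w \<in> P2" using ws unfolding shuffle_def by auto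
  from p1 obtain i1 e1 t1 where r1: "i1 \<in> initial A1" "vpa_steps A1 \<kappa> (i1, []) (f1 w) (e1, t1)" "e1 \<in> final A1"
    unfolding L1[symmetric] vpa_lang_def by blast
  from p2 obtain i2 e2 t2 where r2: "i2 \<in> initial A2" "vpa_steps A2 \<kappa> (i2, []) (f2 w) (e2, t2)" "e2 \<in> final A2"
    unfolding L2[symmetric] vpa_lang_def by blast
  have AL: "\<forall>x a y. w = x @ a # y \<and> \<kappa> a = Ret \<longrightarrow> pend \<kappa> x \<noteq> [] \<and> (hd (pend \<kappa> x) \<in> \<Sigma>1 \<longleftrightarrow> a \<in> \<Sigma>1)"
    using align[OF wl disj _ _ wn'] wm1 wm2 p1 p2 by blast
  have ok: "ok [] w {} {}" using ok_iff[OF wl] red_iff[OF ws] wr by simp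
  have r0: "dvpa_run D \<kappa> (dinit D, []) [] = (dinit D, map (snd \<circ> snd) [])" by simp
  have ms0: "dinit D \<in> dstates D" using wfD unfolding dvpa_wf_def by (elim conjE) simp
  have ms: "(i1,i2,dinit D,{},{}) \<in> MS"
    using r1(1) r2(1) wfp4[OF wf1] wfp4[OF wf2] ms0 by (auto simp: MS_def)
  obtain qd' F1' F2' S' where R: "vpa_steps M \<kappa> ((i1,i2,dinit D,{},{}), []) w ((e1,e2,qd',F1',F2'), S')"
    "(e1,e2,qd',F1',F2') \<in> MS"
    using bwd[OF AL wl, of "[]" w i1 "[]" e1 t1 i2 "[]" e2 t2 "dinit D" "[]" "{}" "{}"] r1 r2 r0 ok ms by auto
  have "(e1,e2,qd',F1',F2') \<in> final M" using R(2) r1(3) r2(3) by (auto simp: M_simps MS_def)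
  moreover have "(i1,i2,dinit D,{},{}) \<in> initial M" using r1 r2 by (simp add: M_simps)
  ultimately show "w \<in> vpa_lang (\<Sigma>1 \<union> \<Sigma>2) \<kappa> M" unfolding vpa_lang_def using wl R(1) by blast
qed

end

theorem theorem3p14:
  fixes \<Sigma>1 \<Sigma>2 :: "'a set"
    and \<kappa> :: "'a \<Rightarrow> letter_kind"
    and P1 P2 :: "'a list set"
    and prec :: "'a list \<Rightarrow> 'a \<Rightarrow> 'a \<Rightarrow> bool"
  assumes "finite \<Sigma>1" and "finite \<Sigma>2" and "\<Sigma>1 \<inter> \<Sigma>2 = {}"
    and "P1 \<subseteq> lists \<Sigma>1" and "P2 \<subseteq> lists \<Sigma>2"
    and "\<forall>w \<in> P1. well_matched \<kappa> w" and "\<forall>w \<in> P2. well_matched \<kappa> w"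
    and "is_vpl \<Sigma>1 \<kappa> P1" and "is_vpl \<Sigma>2 \<kappa> P2"
    and "vp_contextual_order (\<Sigma>1 \<union> \<Sigma>2) \<kappa> prec"
    and "red \<Sigma>1 \<Sigma>2 prec (shuffle \<Sigma>1 \<Sigma>2 P1 P2)
           \<subseteq> wn \<Sigma>1 \<Sigma>2 \<kappa> (shuffle \<Sigma>1 \<Sigma>2 P1 P2)"
  shows "is_vpl (\<Sigma>1 \<union> \<Sigma>2) \<kappa> (red \<Sigma>1 \<Sigma>2 prec (shuffle \<Sigma>1 \<Sigma>2 P1 P2))"
proof -
  obtain A1 :: "(nat,nat,'a) vpa" where A1: "vpa_wf \<Sigma>1 \<kappa> A1" "vpa_lang \<Sigma>1 \<kappa> A1 = P1"
    using assms(8) unfolding is_vpl_def by blast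
  obtain A2 :: "(nat,nat,'a) vpa" where A2: "vpa_wf \<Sigma>2 \<kappa> A2" "vpa_lang \<Sigma>2 \<kappa> A2 = P2"
    using assms(9) unfolding is_vpl_def by blast
  obtain D :: "(nat,nat,'a) dvpa" and ord where D: "dvpa_wf (\<Sigma>1 \<union> \<Sigma>2) \<kappa> D"
    "\<forall>w \<in> lists (\<Sigma>1 \<union> \<Sigma>2). prec w = ord (dvpa_state D \<kappa> w)" and co: "contextual_order (\<Sigma>1 \<union> \<Sigma>2) prec"
    using assms(10) unfolding vp_contextual_order_def by blast
  interpret mach \<Sigma>1 \<Sigma>2 prec \<kappa> A1 A2 D ord
    by unfold_locales (use assms A1 A2 D co in auto)
  have "vpa_lang (\<Sigma>1 \<union> \<Sigma>2) \<kappa> M = red \<Sigma>1 \<Sigma>2 prec (shuffle \<Sigma>1 \<Sigma>2 P1 P2)"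
    using M_lang[OF A1(2) A2(2) assms(6,7,11)] .
  then show ?thesis using wf_is_vpl[OF M_wf] by simp
qed


end
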